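(* Denote by $(a_2,a_4,a_5,a_6,a_7,a_8)$ the Lie algebra of the family $F_8$ with $a_1=0$ and these remaining parameters. Then every such Lie algebra is isomorphic to one of the following: $(\lambda,1,-1,1,0,0)$, $(\lambda,1,0,0,0,0)$, $(-2,1,1,0,0,0)$, $(1,0,-1,1,\lambda,0)$, $(0,0,\lambda,1,1,0)$, $(0,0,\lambda,1,0,0)$, $(\lambda,0,0,0,1,1)$, $(1,0,0,0,1,0)$, $(1,0,0,0,0,1)$, $(1,0,0,0,0,0)$, $(0,0,1,0,1,0)$, $(0,0,1,0,0,0)$, $(0,0,0,0,1,0)$, $(0,0,0,0,0,1)$, $(0,0,0,0,0,0)$, where $\lambda\in\mathbb{K}$.
   Context: $\mathbb{K}$ is algebraically closed of characteristic $0$ (e.g. $\mathbb{C}$). The family $F_8$ on basis $\{X_0,\dots,X_7\}$ (parameters $a_1,a_2,a_4,a_5,a_6,a_7,a_8\in\mathbb{K}$ with $a_1(5a_4+2a_2)=0$): $\mu(X_0,X_i)=X_{i+1}$ ($1\le i\le 6$), $\mu(X_2,X_5)=a_1X_7$, $\mu(X_1,X_5)=a_1X_6+a_2X_7$, $\mu(X_3,X_4)=-a_1X_7$, $\mu(X_2,X_4)=a_4X_7$, $\mu(X_1,X_4)=a_1X_5+(a_2+a_4)X_6+a_5X_7$, $\mu(X_2,X_3)=a_4X_6+a_6X_7$, $\mu(X_1,X_3)=a_1X_4+(a_2+2a_4)X_5+(a_5+a_6)X_6+a_7X_7$, $\mu(X_1,X_2)=a_1X_3+(a_2+2a_4)X_4+(a_5+a_6)X_5+a_7X_6+a_8X_7$,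 all other brackets $\mu(X_i,X_j)$, $i<j$, zero. *)

theory Defs
  imports "HOL-Computational_Algebra.Polynomial"
begin

text \<open>Vectors of the 8-dimensional space with basis X_0..X_7 are coordinate
functions nat => 'a vanishing outside {0..7}.\<close>

definition basis_vec :: "nat \<Rightarrow> nat \<Rightarrow> 'a::field" where
  "basis_vec k = (\<lambda>m. if m = k then 1 else 0)"

definition V8 :: "(nat \<Rightarrow> 'a::field) set" where
  "V8 = {x. \<forall>i\<ge>8. x i = 0}"

definition F8_up :: "'a::field \<Rightarrow> 'a \<Rightarrow> 'a \<Rightarrow> 'a \<Rightarrow> 'a \<Rightarrow> 'a \<Rightarrow> 'a
    \<Rightarrow> nat \<Rightarrow> nat \<Rightarrow> nat \<Rightarrow> 'a" where
  "F8_up a1 a2 a4 a5 a6 a7 a8 i j =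
    (let e = basis_vec in
     if i = 0 \<and> 1 \<le> j \<and> j \<le> 6 then e (j+1)
     else if i = 2 \<and> j = 5 then (\<lambda>k. a1 * e 7 k)
     else if i = 1 \<and> j = 5 then (\<lambda>k. a1 * e 6 k + a2 * e 7 k)
     else if i = 3 \<and> j = 4 then (\<lambda>k. - a1 * e 7 k)
     else if i = 2 \<and> j = 4 then (\<lambda>k. a4 * e 7 k)
     else if i = 1 \<and> j = 4 then (\<lambda>k. a1 * e 5 k + (a2 + a4) * e 6 k + a5 * e 7 k)
     else if i = 2 \<and> j = 3 then (\<lambda>k. a4 * e 6 k + a6 * e 7 k)
     else if i = 1 \<and> j = 3 then
       (\<lambda>k. a1 * e 4 k + (a2 + 2 * a4) * e 5 k + (a5 + a6) * e 6 k + a7 * e 7 k)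
     else if i = 1 \<and> j = 2 then
       (\<lambda>k. a1 * e 3 k + (a2 + 2 * a4) * e 4 k + (a5 + a6) * e 5 k + a7 * e 6 k + a8 * e 7 k)
     else (\<lambda>k. 0))"

text \<open>Structure constants: sc i j k = coefficient of X_k in mu(X_i,X_j), extended
by skew-symmetry.\<close>
definition F8 :: "'a::field \<Rightarrow> 'a \<Rightarrow> 'a \<Rightarrow> 'a \<Rightarrow> 'a \<Rightarrow> 'a \<Rightarrow> 'a
    \<Rightarrow> nat \<Rightarrow> nat \<Rightarrow> nat \<Rightarrow> 'a" where
  "F8 a1 a2 a4 a5 a6 a7 a8 i j =
    (if i < j then F8_up a1 a2 a4 a5 a6 a7 a8 i j
     else if j < i then (\<lambda>k. - F8_up a1 a2 a4 a5 a6 a7 a8 j i k)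
     else (\<lambda>k. 0))"

definition lbr :: "(nat \<Rightarrow> nat \<Rightarrow> nat \<Rightarrow> 'a::field) \<Rightarrow> (nat \<Rightarrow> 'a) \<Rightarrow> (nat \<Rightarrow> 'a) \<Rightarrow> nat \<Rightarrow> 'a" where
  "lbr c x y = (\<lambda>k. \<Sum>i<8. \<Sum>j<8. x i * y j * c i j k)"

definition lie_iso8 :: "(nat \<Rightarrow> nat \<Rightarrow> nat \<Rightarrow> 'a::field) \<Rightarrow> (nat \<Rightarrow> nat \<Rightarrow> nat \<Rightarrow> 'a) \<Rightarrow> bool" where
  "lie_iso8 c c' = (\<exists>f. bij_betw f V8 V8
      \<and> (\<forall>x\<in>V8. \<forall>y\<in>V8. f (\<lambda>k. x k + y k) = (\<lambda>k. f x k + f y k))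
      \<and> (\<forall>x\<in>V8. \<forall>s. f (\<lambda>k. s * x k) = (\<lambda>k. s * f x k))
      \<and> (\<forall>x\<in>V8. \<forall>y\<in>V8. f (lbr c x y) = lbr c' (f x) (f y)))"

definition L8 :: "'a::field \<Rightarrow> 'a \<Rightarrow> 'a \<Rightarrow> 'a \<Rightarrow> 'a \<Rightarrow> 'a \<Rightarrow> nat \<Rightarrow> nat \<Rightarrow> nat \<Rightarrow> 'a" where
  "L8 a2 a4 a5 a6 a7 a8 = F8 0 a2 a4 a5 a6 a7 a8"

definition alg_closed :: "'a::field itself \<Rightarrow> bool" where
  "alg_closed _ = (\<forall>p::'a poly. degree p > 0 \<longrightarrow> (\<exists>x. poly p x = 0))"

end

theory Submission imports Defs begin

lemma sum8: "(\<Sum>i<(8::nat). f i) = f 0 + f 1 + f 2 + f 3 + f 4 + f 5 + f 6 + (f 7::'a::comm_monoid_add)"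
  by (simp add: numeral_eq_Suc lessThan_Suc add_ac)

lemma all8: "(\<forall>i<(8::nat). P i) \<longleftrightarrow> P 0 \<and> P 1 \<and> P 2 \<and> P 3 \<and> P 4 \<and> P 5 \<and> P 6 \<and> P 7"
proof -
  have "{..<8::nat} = {0,1,2,3,4,5,6,7}" by auto
  then show ?thesis by (metis lessThan_iff insert_iff empty_iff)
qed

definition matf :: "(nat \<Rightarrow> nat \<Rightarrow> 'a::field) \<Rightarrow> (nat \<Rightarrow> 'a) \<Rightarrow> nat \<Rightarrow> 'a" where
  "matf M x = (\<lambda>k. if k < 8 then (\<Sum>i<8. M k i * x i) else 0)"

lemma V8_add: "x \<in> V8 \<Longrightarrow> y \<in> V8 \<Longrightarrow> (\<lambda>k. x k + y k) \<in> V8" by (simp add: V8_def)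
lemma V8_smult: "x \<in> V8 \<Longrightarrow> (\<lambda>k. s * x k) \<in> V8" by (simp add: V8_def)
lemma matf_V8: "matf M x \<in> V8" by (simp add: V8_def matf_def)
lemma lbr_V8: "(\<And>p q k. 8 \<le> k \<Longrightarrow> c p q k = 0) \<Longrightarrow> lbr c x y \<in> V8"
  by (simp add: V8_def lbr_def)

lemma tri_split:
  fixes M :: "nat \<Rightarrow> nat \<Rightarrow> 'a::field" and k :: nat
  assumes tri: "\<And>k i. k < i \<Longrightarrow> M k i = 0" and k: "k < 8"
  shows "(\<Sum>i<8. M k i * z i) = (\<Sum>i<k. M k i * z i) + M k k * z k"
proof -
  have "(\<Sum>i<8. M k i * z i) = (\<Sum>i<Suc k. M k i * z i)"
    by (rule sum.mono_neutral_right) (use k tri in auto)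
  then show ?thesis by simp
qed

lemma tri_inj:
  fixes M :: "nat \<Rightarrow> nat \<Rightarrow> 'a::field"
  assumes tri: "\<And>k i. k < i \<Longrightarrow> M k i = 0" and diag: "\<And>i. i < 8 \<Longrightarrow> M i i \<noteq> 0"
  and x: "x \<in> V8" and y: "y \<in> V8" and eq: "matf M x = matf M y"
  shows "x = y"
proof -
  have key: "(\<Sum>i<8. M k i * x i) = (\<Sum>i<8. M k i * y i)" if "k < 8" for k
    using fun_cong[OF eq, of k] that by (simp add: matf_def)
  have "x k = y k" if "k < 8" for k
    using that
  proof (induction k rule: less_induct)
    case (less k)
    have "(\<Sum>i<k. M k i * x i) = (\<Sum>i<k. M k i * y i)"
      by (rule sum.cong) (use less in auto)
    then have "M k k * x k = M k k * y k"
      using key[OF less.prems] tri_split[where M=M and k=k and z=x, OF tri less.prems] tri_split[where M=M and k=k and z=y, OF tri less.prems]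
      by simp
    then show ?case using diag[OF less.prems] by simp
  qed
  moreover have "x k = y k" if "\<not> k < 8" for k using x y that by (simp add: V8_def)
  ultimately show ?thesis by (metis ext)
qed

primrec solv :: "(nat \<Rightarrow> nat \<Rightarrow> 'a::field) \<Rightarrow> (nat \<Rightarrow> 'a) \<Rightarrow> nat \<Rightarrow> nat \<Rightarrow> 'a" where
  "solv M y 0 = (\<lambda>_. 0)"
| "solv M y (Suc n) = (solv M y n)(n := (y n - (\<Sum>j<n. M n j * solv M y n j)) / M n n)"

lemma solv_ge: "n \<le> i \<Longrightarrow> solv M y n i = 0"
  by (induction n) auto

lemma solv_stable: "i < n \<Longrightarrow> solv M y n i = solv M y (Suc i) i"
  by (induction n) (auto simp: less_Suc_eq)

lemma tri_surj:
  fixes M :: "nat \<Rightarrow> nat \<Rightarrow> 'a::field"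
  assumes tri: "\<And>k i. k < i \<Longrightarrow> M k i = 0" and diag: "\<And>i. i < 8 \<Longrightarrow> M i i \<noteq> 0"
  and y: "y \<in> V8"
  shows "\<exists>x\<in>V8. matf M x = y"
proof -
  define x where "x = solv M y 8"
  have xV: "x \<in> V8" by (simp add: V8_def x_def solv_ge)
  have "matf M x k = y k" for k
  proof (cases "k < 8")
    case True
    have xk: "x k = solv M y (Suc k) k" using True by (simp add: x_def solv_stable)
    have "(\<Sum>j<k. M k j * solv M y k j) = (\<Sum>j<k. M k j * x j)"
      using True by (intro sum.cong) (auto simp: x_def solv_stable)
    then have "M k k * x k = y k - (\<Sum>j<k. M k j * x j)"
      using diag[OF True] by (simp add: xk)
    then show ?thesis using tri_split[where M=M and k=k and z=x, OF tri True] True by (simp add: matf_def)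
  next
    case False then show ?thesis using y by (simp add: matf_def V8_def)
  qed
  then show ?thesis using xV by blast
qed

lemma swap_inner: "(\<Sum>i\<in>A. \<Sum>j\<in>B. \<Sum>p\<in>C. f i j p) = (\<Sum>i\<in>A. \<Sum>p\<in>C. \<Sum>j\<in>B. f i j p)"
  by (rule sum.cong[OF refl], rule sum.swap)

lemma rearr1:
  fixes M :: "nat \<Rightarrow> nat \<Rightarrow> 'a::field" and x y :: "nat \<Rightarrow> 'a"
  shows "(\<Sum>m<8. M k m * (\<Sum>i<8. \<Sum>j<8. x i * y j * c i j m))
       = (\<Sum>i<8. \<Sum>j<8. x i * y j * (\<Sum>m<8. M k m * c i j m))"
proof -
  have "(\<Sum>m<8. M k m * (\<Sum>i<8. \<Sum>j<8. x i * y j * c i j m))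
      = (\<Sum>m<(8::nat). \<Sum>i<(8::nat). \<Sum>j<(8::nat). M k m * (x i * y j * c i j m))"
    by (simp add: sum_distrib_left)
  also have "\<dots> = (\<Sum>i<(8::nat). \<Sum>m<(8::nat). \<Sum>j<(8::nat). M k m * (x i * y j * c i j m))"
    by (rule sum.swap)
  also have "\<dots> = (\<Sum>i<(8::nat). \<Sum>j<(8::nat). \<Sum>m<(8::nat). M k m * (x i * y j * c i j m))"
    by (rule swap_inner)
  also have "\<dots> = (\<Sum>i<8. \<Sum>j<8. x i * y j * (\<Sum>m<8. M k m * c i j m))"
    by (simp add: sum_distrib_left mult_ac)
  finally show ?thesis .
qed

lemma rearr2:
  fixes M :: "nat \<Rightarrow> nat \<Rightarrow> 'a::field" and x y :: "nat \<Rightarrow> 'a"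
  shows "(\<Sum>i<8. \<Sum>j<8. x i * y j * (\<Sum>p<8. \<Sum>q<8. M p i * M q j * d p q))
     = (\<Sum>p<8. \<Sum>q<8. (\<Sum>i<8. M p i * x i) * (\<Sum>j<8. M q j * y j) * d p q)"
proof -
  let ?F = "\<lambda>i j p q. x i * y j * (M p i * M q j * d p q)"
  have "(\<Sum>i<8. \<Sum>j<8. x i * y j * (\<Sum>p<8. \<Sum>q<8. M p i * M q j * d p q))
      = (\<Sum>i<(8::nat). \<Sum>j<(8::nat). \<Sum>p<(8::nat). \<Sum>q<(8::nat). ?F i j p q)"
    by (simp add: sum_distrib_left)
  also have "\<dots> = (\<Sum>i<(8::nat). \<Sum>p<(8::nat). \<Sum>j<(8::nat). \<Sum>q<(8::nat). ?F i j p q)"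
    by (rule swap_inner)
  also have "\<dots> = (\<Sum>p<(8::nat). \<Sum>i<(8::nat). \<Sum>j<(8::nat). \<Sum>q<(8::nat). ?F i j p q)"
    by (rule sum.swap)
  also have "\<dots> = (\<Sum>p<(8::nat). \<Sum>i<(8::nat). \<Sum>q<(8::nat). \<Sum>j<(8::nat). ?F i j p q)"
    by (rule sum.cong[OF refl], rule swap_inner)
  also have "\<dots> = (\<Sum>p<(8::nat). \<Sum>q<(8::nat). \<Sum>i<(8::nat). \<Sum>j<(8::nat). ?F i j p q)"
    by (rule sum.cong[OF refl], rule sum.swap)
  also have "\<dots> = (\<Sum>p<8. \<Sum>q<8. (\<Sum>i<8. M p i * x i) * (\<Sum>j<8. M q j * y j) * d p q)"
    unfolding sum_product sum_distrib_right by (intro sum.cong refl) (simp add: sum_distrib_left mult_ac)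
  finally show ?thesis .
qed

lemma iso_matrix:
  fixes M :: "nat \<Rightarrow> nat \<Rightarrow> 'a::field"
  assumes tri: "\<And>k i. k < i \<Longrightarrow> M k i = 0" and diag: "\<And>i. i < 8 \<Longrightarrow> M i i \<noteq> 0"
    and tgt: "\<And>p q k. 8 \<le> k \<Longrightarrow> c' p q k = 0"
    and str: "\<forall>i<8. \<forall>j<8. \<forall>k<8. (\<Sum>m<8. M k m * c i j m) = (\<Sum>p<8. \<Sum>q<8. M p i * M q j * c' p q k)"
  shows "lie_iso8 c c'"
  unfolding lie_iso8_def
proof (intro exI conjI ballI allI)
  show "bij_betw (matf M) V8 V8"
  proof -
    have i: "inj_on (matf M) V8" unfolding inj_on_def using tri_inj[of M] tri diag by blast
    have "V8 \<subseteq> matf M ` V8" using tri_surj[of M] tri diag by blast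
    moreover have "matf M ` V8 \<subseteq> V8" using matf_V8 by blast
    ultimately show ?thesis using i unfolding bij_betw_def by blast
  qed
next
  fix x y :: "nat \<Rightarrow> 'a" assume "x \<in> V8" "y \<in> V8"
  show "matf M (\<lambda>k. x k + y k) = (\<lambda>k. matf M x k + matf M y k)"
    by (auto simp: matf_def algebra_simps sum.distrib)
next
  fix x :: "nat \<Rightarrow> 'a" and s assume "x \<in> V8"
  show "matf M (\<lambda>k. s * x k) = (\<lambda>k. s * matf M x k)"
    by (auto simp: matf_def algebra_simps sum_distrib_left)
next
  fix x y :: "nat \<Rightarrow> 'a" assume "x \<in> V8" "y \<in> V8"
  show "matf M (lbr c x y) = lbr c' (matf M x) (matf M y)"
  proof
    fix k
    show "matf M (lbr c x y) k = lbr c' (matf M x) (matf M y) k"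
    proof (cases "k < 8")
      case False then show ?thesis by (simp add: matf_def lbr_def tgt)
    next
      case True
      have "matf M (lbr c x y) k = (\<Sum>m<8. M k m * (\<Sum>i<8. \<Sum>j<8. x i * y j * c i j m))"
        using True by (simp add: matf_def lbr_def)
      also have "\<dots> = (\<Sum>i<8. \<Sum>j<8. x i * y j * (\<Sum>m<8. M k m * c i j m))"
        by (rule rearr1)
      also have "\<dots> = (\<Sum>i<8. \<Sum>j<8. x i * y j * (\<Sum>p<8. \<Sum>q<8. M p i * M q j * c' p q k))"
        using str True by simp
      also have "\<dots> = (\<Sum>p<8. \<Sum>q<8. (\<Sum>i<8. M p i * x i) * (\<Sum>j<8. M q j * y j) * c' p q k)"
        by (rule rearr2)
      also have "\<dots> = lbr c' (matf M x) (matf M y) k"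
        by (simp add: lbr_def matf_def)
      finally show ?thesis .
    qed
  qed
qed

lemma iso_trans:
  assumes "lie_iso8 c1 c2" "lie_iso8 c2 c3"
  shows "lie_iso8 c1 c3"
proof -
  obtain f where f: "bij_betw f V8 V8"
      "\<forall>x\<in>V8. \<forall>y\<in>V8. f (\<lambda>k. x k + y k) = (\<lambda>k. f x k + f y k)"
      "\<forall>x\<in>V8. \<forall>s. f (\<lambda>k. s * x k) = (\<lambda>k. s * f x k)"
      "\<forall>x\<in>V8. \<forall>y\<in>V8. f (lbr c1 x y) = lbr c2 (f x) (f y)"
    using assms(1) unfolding lie_iso8_def by blast
  obtain g where g: "bij_betw g V8 V8"
      "\<forall>x\<in>V8. \<forall>y\<in>V8. g (\<lambda>k. x k + y k) = (\<lambda>k. g x k + g y k)"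
      "\<forall>x\<in>V8. \<forall>s. g (\<lambda>k. s * x k) = (\<lambda>k. s * g x k)"
      "\<forall>x\<in>V8. \<forall>y\<in>V8. g (lbr c2 x y) = lbr c3 (g x) (g y)"
    using assms(2) unfolding lie_iso8_def by blast
  have fV: "f x \<in> V8" if "x \<in> V8" for x using f(1) that by (metis bij_betw_apply)
  show ?thesis unfolding lie_iso8_def
    apply (rule exI[of _ "g \<circ> f"])
    using f g fV bij_betw_trans[OF f(1) g(1)] by simp
qed

lemma iso_sym:
  fixes c c' :: "nat \<Rightarrow> nat \<Rightarrow> nat \<Rightarrow> 'a::field"
  assumes "lie_iso8 c c'" and van: "\<And>p q k. 8 \<le> k \<Longrightarrow> c p q k = 0"
  shows "lie_iso8 c' c"
proof -
  obtain f where f: "bij_betw f V8 V8"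
      "\<forall>x\<in>V8. \<forall>y\<in>V8. f (\<lambda>k. x k + y k) = (\<lambda>k. f x k + f y k)"
      "\<forall>x\<in>V8. \<forall>s. f (\<lambda>k. s * x k) = (\<lambda>k. s * f x k)"
      "\<forall>x\<in>V8. \<forall>y\<in>V8. f (lbr c x y) = lbr c' (f x) (f y)"
    using assms(1) unfolding lie_iso8_def by blast
  define g where "g = inv_into V8 f"
  have gb: "bij_betw g V8 V8" unfolding g_def by (rule bij_betw_inv_into[OF f(1)])
  have gV: "g u \<in> V8" if "u \<in> V8" for u using gb that by (metis bij_betw_apply)
  have fg: "f (g u) = u" if "u \<in> V8" for u
    unfolding g_def using f(1) that by (simp add: bij_betw_inv_into_right)
  have gf: "g (f x) = x" if "x \<in> V8" for x
    unfolding g_def using f(1) that by (simp add: bij_betw_inv_into_left)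
  show ?thesis unfolding lie_iso8_def
  proof (intro exI[of _ g] conjI ballI allI gb)
    fix u v :: "nat \<Rightarrow> 'a" assume u: "u \<in> V8" and v: "v \<in> V8"
    have "f (\<lambda>k. g u k + g v k) = (\<lambda>k. u k + v k)" using f(2) gV fg u v by simp
    then have "g (\<lambda>k. u k + v k) = g (f (\<lambda>k. g u k + g v k))" by simp
    also have "\<dots> = (\<lambda>k. g u k + g v k)" using gf V8_add gV u v by blast
    finally show "g (\<lambda>k. u k + v k) = (\<lambda>k. g u k + g v k)" .
  next
    fix u :: "nat \<Rightarrow> 'a" and s assume u: "u \<in> V8"
    have "f (\<lambda>k. s * g u k) = (\<lambda>k. s * u k)" using f(3) gV fg u by simp
    then have "g (\<lambda>k. s * u k) = g (f (\<lambda>k. s * g u k))" by simp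
    also have "\<dots> = (\<lambda>k. s * g u k)" using gf V8_smult gV u by blast
    finally show "g (\<lambda>k. s * u k) = (\<lambda>k. s * g u k)" .
  next
    fix u v :: "nat \<Rightarrow> 'a" assume u: "u \<in> V8" and v: "v \<in> V8"
    have "f (lbr c (g u) (g v)) = lbr c' u v" using f(4) gV fg u v by simp
    then have "g (lbr c' u v) = g (f (lbr c (g u) (g v)))" by simp
    also have "\<dots> = lbr c (g u) (g v)" using gf lbr_V8[where c=c, OF van] by blast
    finally show "g (lbr c' u v) = lbr c (g u) (g v)" .
  qed
qed

lemma L8_van: "8 \<le> k \<Longrightarrow> L8 a2 a4 a5 a6 a7 a8 p q k = 0"
  by (simp add: L8_def F8_def F8_up_def basis_vec_def Let_def)

lemma L8_tab:
  fixes a2 a4 a5 a6 a7 a8 :: "'a::field"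
  shows
  "L8 a2 a4 a5 a6 a7 a8 0 0 0 = 0"
  "L8 a2 a4 a5 a6 a7 a8 0 0 1 = 0"
  "L8 a2 a4 a5 a6 a7 a8 0 0 2 = 0"
  "L8 a2 a4 a5 a6 a7 a8 0 0 3 = 0"
  "L8 a2 a4 a5 a6 a7 a8 0 0 4 = 0"
  "L8 a2 a4 a5 a6 a7 a8 0 0 5 = 0"
  "L8 a2 a4 a5 a6 a7 a8 0 0 6 = 0"
  "L8 a2 a4 a5 a6 a7 a8 0 0 7 = 0"
  "L8 a2 a4 a5 a6 a7 a8 0 1 0 = 0"
  "L8 a2 a4 a5 a6 a7 a8 0 1 1 = 0"
  "L8 a2 a4 a5 a6 a7 a8 0 1 2 = (1)"
  "L8 a2 a4 a5 a6 a7 a8 0 1 3 = 0"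
  "L8 a2 a4 a5 a6 a7 a8 0 1 4 = 0"
  "L8 a2 a4 a5 a6 a7 a8 0 1 5 = 0"
  "L8 a2 a4 a5 a6 a7 a8 0 1 6 = 0"
  "L8 a2 a4 a5 a6 a7 a8 0 1 7 = 0"
  "L8 a2 a4 a5 a6 a7 a8 0 2 0 = 0"
  "L8 a2 a4 a5 a6 a7 a8 0 2 1 = 0"
  "L8 a2 a4 a5 a6 a7 a8 0 2 2 = 0"
  "L8 a2 a4 a5 a6 a7 a8 0 2 3 = (1)"
  "L8 a2 a4 a5 a6 a7 a8 0 2 4 = 0"
  "L8 a2 a4 a5 a6 a7 a8 0 2 5 = 0"
  "L8 a2 a4 a5 a6 a7 a8 0 2 6 = 0"
  "L8 a2 a4 a5 a6 a7 a8 0 2 7 = 0"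
  "L8 a2 a4 a5 a6 a7 a8 0 3 0 = 0"
  "L8 a2 a4 a5 a6 a7 a8 0 3 1 = 0"
  "L8 a2 a4 a5 a6 a7 a8 0 3 2 = 0"
  "L8 a2 a4 a5 a6 a7 a8 0 3 3 = 0"
  "L8 a2 a4 a5 a6 a7 a8 0 3 4 = (1)"
  "L8 a2 a4 a5 a6 a7 a8 0 3 5 = 0"
  "L8 a2 a4 a5 a6 a7 a8 0 3 6 = 0"
  "L8 a2 a4 a5 a6 a7 a8 0 3 7 = 0"
  "L8 a2 a4 a5 a6 a7 a8 0 4 0 = 0"
  "L8 a2 a4 a5 a6 a7 a8 0 4 1 = 0"
  "L8 a2 a4 a5 a6 a7 a8 0 4 2 = 0"
  "L8 a2 a4 a5 a6 a7 a8 0 4 3 = 0"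
  "L8 a2 a4 a5 a6 a7 a8 0 4 4 = 0"
  "L8 a2 a4 a5 a6 a7 a8 0 4 5 = (1)"
  "L8 a2 a4 a5 a6 a7 a8 0 4 6 = 0"
  "L8 a2 a4 a5 a6 a7 a8 0 4 7 = 0"
  "L8 a2 a4 a5 a6 a7 a8 0 5 0 = 0"
  "L8 a2 a4 a5 a6 a7 a8 0 5 1 = 0"
  "L8 a2 a4 a5 a6 a7 a8 0 5 2 = 0"
  "L8 a2 a4 a5 a6 a7 a8 0 5 3 = 0"
  "L8 a2 a4 a5 a6 a7 a8 0 5 4 = 0"
  "L8 a2 a4 a5 a6 a7 a8 0 5 5 = 0"
  "L8 a2 a4 a5 a6 a7 a8 0 5 6 = (1)"
  "L8 a2 a4 a5 a6 a7 a8 0 5 7 = 0"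
  "L8 a2 a4 a5 a6 a7 a8 0 6 0 = 0"
  "L8 a2 a4 a5 a6 a7 a8 0 6 1 = 0"
  "L8 a2 a4 a5 a6 a7 a8 0 6 2 = 0"
  "L8 a2 a4 a5 a6 a7 a8 0 6 3 = 0"
  "L8 a2 a4 a5 a6 a7 a8 0 6 4 = 0"
  "L8 a2 a4 a5 a6 a7 a8 0 6 5 = 0"
  "L8 a2 a4 a5 a6 a7 a8 0 6 6 = 0"
  "L8 a2 a4 a5 a6 a7 a8 0 6 7 = (1)"
  "L8 a2 a4 a5 a6 a7 a8 0 7 0 = 0"
  "L8 a2 a4 a5 a6 a7 a8 0 7 1 = 0"
  "L8 a2 a4 a5 a6 a7 a8 0 7 2 = 0"
  "L8 a2 a4 a5 a6 a7 a8 0 7 3 = 0"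
  "L8 a2 a4 a5 a6 a7 a8 0 7 4 = 0"
  "L8 a2 a4 a5 a6 a7 a8 0 7 5 = 0"
  "L8 a2 a4 a5 a6 a7 a8 0 7 6 = 0"
  "L8 a2 a4 a5 a6 a7 a8 0 7 7 = 0"
  "L8 a2 a4 a5 a6 a7 a8 1 0 0 = 0"
  "L8 a2 a4 a5 a6 a7 a8 1 0 1 = 0"
  "L8 a2 a4 a5 a6 a7 a8 1 0 2 = ((-1))"
  "L8 a2 a4 a5 a6 a7 a8 1 0 3 = 0"
  "L8 a2 a4 a5 a6 a7 a8 1 0 4 = 0"
  "L8 a2 a4 a5 a6 a7 a8 1 0 5 = 0"
  "L8 a2 a4 a5 a6 a7 a8 1 0 6 = 0"
  "L8 a2 a4 a5 a6 a7 a8 1 0 7 = 0"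
  "L8 a2 a4 a5 a6 a7 a8 1 1 0 = 0"
  "L8 a2 a4 a5 a6 a7 a8 1 1 1 = 0"
  "L8 a2 a4 a5 a6 a7 a8 1 1 2 = 0"
  "L8 a2 a4 a5 a6 a7 a8 1 1 3 = 0"
  "L8 a2 a4 a5 a6 a7 a8 1 1 4 = 0"
  "L8 a2 a4 a5 a6 a7 a8 1 1 5 = 0"
  "L8 a2 a4 a5 a6 a7 a8 1 1 6 = 0"
  "L8 a2 a4 a5 a6 a7 a8 1 1 7 = 0"
  "L8 a2 a4 a5 a6 a7 a8 1 2 0 = 0"
  "L8 a2 a4 a5 a6 a7 a8 1 2 1 = 0"
  "L8 a2 a4 a5 a6 a7 a8 1 2 2 = 0"
  "L8 a2 a4 a5 a6 a7 a8 1 2 3 = 0"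
  "L8 a2 a4 a5 a6 a7 a8 1 2 4 = (2 * a4 + a2)"
  "L8 a2 a4 a5 a6 a7 a8 1 2 5 = (a6 + a5)"
  "L8 a2 a4 a5 a6 a7 a8 1 2 6 = (a7)"
  "L8 a2 a4 a5 a6 a7 a8 1 2 7 = (a8)"
  "L8 a2 a4 a5 a6 a7 a8 1 3 0 = 0"
  "L8 a2 a4 a5 a6 a7 a8 1 3 1 = 0"
  "L8 a2 a4 a5 a6 a7 a8 1 3 2 = 0"
  "L8 a2 a4 a5 a6 a7 a8 1 3 3 = 0"
  "L8 a2 a4 a5 a6 a7 a8 1 3 4 = 0"
  "L8 a2 a4 a5 a6 a7 a8 1 3 5 = (2 * a4 + a2)"
  "L8 a2 a4 a5 a6 a7 a8 1 3 6 = (a6 + a5)"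
  "L8 a2 a4 a5 a6 a7 a8 1 3 7 = (a7)"
  "L8 a2 a4 a5 a6 a7 a8 1 4 0 = 0"
  "L8 a2 a4 a5 a6 a7 a8 1 4 1 = 0"
  "L8 a2 a4 a5 a6 a7 a8 1 4 2 = 0"
  "L8 a2 a4 a5 a6 a7 a8 1 4 3 = 0"
  "L8 a2 a4 a5 a6 a7 a8 1 4 4 = 0"
  "L8 a2 a4 a5 a6 a7 a8 1 4 5 = 0"
  "L8 a2 a4 a5 a6 a7 a8 1 4 6 = (a4 + a2)"
  "L8 a2 a4 a5 a6 a7 a8 1 4 7 = (a5)"
  "L8 a2 a4 a5 a6 a7 a8 1 5 0 = 0"
  "L8 a2 a4 a5 a6 a7 a8 1 5 1 = 0"
  "L8 a2 a4 a5 a6 a7 a8 1 5 2 = 0"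
  "L8 a2 a4 a5 a6 a7 a8 1 5 3 = 0"
  "L8 a2 a4 a5 a6 a7 a8 1 5 4 = 0"
  "L8 a2 a4 a5 a6 a7 a8 1 5 5 = 0"
  "L8 a2 a4 a5 a6 a7 a8 1 5 6 = 0"
  "L8 a2 a4 a5 a6 a7 a8 1 5 7 = (a2)"
  "L8 a2 a4 a5 a6 a7 a8 1 6 0 = 0"
  "L8 a2 a4 a5 a6 a7 a8 1 6 1 = 0"
  "L8 a2 a4 a5 a6 a7 a8 1 6 2 = 0"
  "L8 a2 a4 a5 a6 a7 a8 1 6 3 = 0"
  "L8 a2 a4 a5 a6 a7 a8 1 6 4 = 0"
  "L8 a2 a4 a5 a6 a7 a8 1 6 5 = 0"
  "L8 a2 a4 a5 a6 a7 a8 1 6 6 = 0"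
  "L8 a2 a4 a5 a6 a7 a8 1 6 7 = 0"
  "L8 a2 a4 a5 a6 a7 a8 1 7 0 = 0"
  "L8 a2 a4 a5 a6 a7 a8 1 7 1 = 0"
  "L8 a2 a4 a5 a6 a7 a8 1 7 2 = 0"
  "L8 a2 a4 a5 a6 a7 a8 1 7 3 = 0"
  "L8 a2 a4 a5 a6 a7 a8 1 7 4 = 0"
  "L8 a2 a4 a5 a6 a7 a8 1 7 5 = 0"
  "L8 a2 a4 a5 a6 a7 a8 1 7 6 = 0"
  "L8 a2 a4 a5 a6 a7 a8 1 7 7 = 0"
  "L8 a2 a4 a5 a6 a7 a8 2 0 0 = 0"
  "L8 a2 a4 a5 a6 a7 a8 2 0 1 = 0"
  "L8 a2 a4 a5 a6 a7 a8 2 0 2 = 0"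
  "L8 a2 a4 a5 a6 a7 a8 2 0 3 = ((-1))"
  "L8 a2 a4 a5 a6 a7 a8 2 0 4 = 0"
  "L8 a2 a4 a5 a6 a7 a8 2 0 5 = 0"
  "L8 a2 a4 a5 a6 a7 a8 2 0 6 = 0"
  "L8 a2 a4 a5 a6 a7 a8 2 0 7 = 0"
  "L8 a2 a4 a5 a6 a7 a8 2 1 0 = 0"
  "L8 a2 a4 a5 a6 a7 a8 2 1 1 = 0"
  "L8 a2 a4 a5 a6 a7 a8 2 1 2 = 0"
  "L8 a2 a4 a5 a6 a7 a8 2 1 3 = 0"
  "L8 a2 a4 a5 a6 a7 a8 2 1 4 = ((-2) * a4 + (-1) * a2)"
  "L8 a2 a4 a5 a6 a7 a8 2 1 5 = ((-1) * a6 + (-1) * a5)"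
  "L8 a2 a4 a5 a6 a7 a8 2 1 6 = ((-1) * a7)"
  "L8 a2 a4 a5 a6 a7 a8 2 1 7 = ((-1) * a8)"
  "L8 a2 a4 a5 a6 a7 a8 2 2 0 = 0"
  "L8 a2 a4 a5 a6 a7 a8 2 2 1 = 0"
  "L8 a2 a4 a5 a6 a7 a8 2 2 2 = 0"
  "L8 a2 a4 a5 a6 a7 a8 2 2 3 = 0"
  "L8 a2 a4 a5 a6 a7 a8 2 2 4 = 0"
  "L8 a2 a4 a5 a6 a7 a8 2 2 5 = 0"
  "L8 a2 a4 a5 a6 a7 a8 2 2 6 = 0"
  "L8 a2 a4 a5 a6 a7 a8 2 2 7 = 0"
  "L8 a2 a4 a5 a6 a7 a8 2 3 0 = 0"
  "L8 a2 a4 a5 a6 a7 a8 2 3 1 = 0"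
  "L8 a2 a4 a5 a6 a7 a8 2 3 2 = 0"
  "L8 a2 a4 a5 a6 a7 a8 2 3 3 = 0"
  "L8 a2 a4 a5 a6 a7 a8 2 3 4 = 0"
  "L8 a2 a4 a5 a6 a7 a8 2 3 5 = 0"
  "L8 a2 a4 a5 a6 a7 a8 2 3 6 = (a4)"
  "L8 a2 a4 a5 a6 a7 a8 2 3 7 = (a6)"
  "L8 a2 a4 a5 a6 a7 a8 2 4 0 = 0"
  "L8 a2 a4 a5 a6 a7 a8 2 4 1 = 0"
  "L8 a2 a4 a5 a6 a7 a8 2 4 2 = 0"
  "L8 a2 a4 a5 a6 a7 a8 2 4 3 = 0"
  "L8 a2 a4 a5 a6 a7 a8 2 4 4 = 0"
  "L8 a2 a4 a5 a6 a7 a8 2 4 5 = 0"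
  "L8 a2 a4 a5 a6 a7 a8 2 4 6 = 0"
  "L8 a2 a4 a5 a6 a7 a8 2 4 7 = (a4)"
  "L8 a2 a4 a5 a6 a7 a8 2 5 0 = 0"
  "L8 a2 a4 a5 a6 a7 a8 2 5 1 = 0"
  "L8 a2 a4 a5 a6 a7 a8 2 5 2 = 0"
  "L8 a2 a4 a5 a6 a7 a8 2 5 3 = 0"
  "L8 a2 a4 a5 a6 a7 a8 2 5 4 = 0"
  "L8 a2 a4 a5 a6 a7 a8 2 5 5 = 0"
  "L8 a2 a4 a5 a6 a7 a8 2 5 6 = 0"
  "L8 a2 a4 a5 a6 a7 a8 2 5 7 = 0"
  "L8 a2 a4 a5 a6 a7 a8 2 6 0 = 0"
  "L8 a2 a4 a5 a6 a7 a8 2 6 1 = 0"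
  "L8 a2 a4 a5 a6 a7 a8 2 6 2 = 0"
  "L8 a2 a4 a5 a6 a7 a8 2 6 3 = 0"
  "L8 a2 a4 a5 a6 a7 a8 2 6 4 = 0"
  "L8 a2 a4 a5 a6 a7 a8 2 6 5 = 0"
  "L8 a2 a4 a5 a6 a7 a8 2 6 6 = 0"
  "L8 a2 a4 a5 a6 a7 a8 2 6 7 = 0"
  "L8 a2 a4 a5 a6 a7 a8 2 7 0 = 0"
  "L8 a2 a4 a5 a6 a7 a8 2 7 1 = 0"
  "L8 a2 a4 a5 a6 a7 a8 2 7 2 = 0"
  "L8 a2 a4 a5 a6 a7 a8 2 7 3 = 0"
  "L8 a2 a4 a5 a6 a7 a8 2 7 4 = 0"
  "L8 a2 a4 a5 a6 a7 a8 2 7 5 = 0"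
  "L8 a2 a4 a5 a6 a7 a8 2 7 6 = 0"
  "L8 a2 a4 a5 a6 a7 a8 2 7 7 = 0"
  "L8 a2 a4 a5 a6 a7 a8 3 0 0 = 0"
  "L8 a2 a4 a5 a6 a7 a8 3 0 1 = 0"
  "L8 a2 a4 a5 a6 a7 a8 3 0 2 = 0"
  "L8 a2 a4 a5 a6 a7 a8 3 0 3 = 0"
  "L8 a2 a4 a5 a6 a7 a8 3 0 4 = ((-1))"
  "L8 a2 a4 a5 a6 a7 a8 3 0 5 = 0"
  "L8 a2 a4 a5 a6 a7 a8 3 0 6 = 0"
  "L8 a2 a4 a5 a6 a7 a8 3 0 7 = 0"
  "L8 a2 a4 a5 a6 a7 a8 3 1 0 = 0"
  "L8 a2 a4 a5 a6 a7 a8 3 1 1 = 0"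
  "L8 a2 a4 a5 a6 a7 a8 3 1 2 = 0"
  "L8 a2 a4 a5 a6 a7 a8 3 1 3 = 0"
  "L8 a2 a4 a5 a6 a7 a8 3 1 4 = 0"
  "L8 a2 a4 a5 a6 a7 a8 3 1 5 = ((-2) * a4 + (-1) * a2)"
  "L8 a2 a4 a5 a6 a7 a8 3 1 6 = ((-1) * a6 + (-1) * a5)"
  "L8 a2 a4 a5 a6 a7 a8 3 1 7 = ((-1) * a7)"
  "L8 a2 a4 a5 a6 a7 a8 3 2 0 = 0"
  "L8 a2 a4 a5 a6 a7 a8 3 2 1 = 0"
  "L8 a2 a4 a5 a6 a7 a8 3 2 2 = 0"
  "L8 a2 a4 a5 a6 a7 a8 3 2 3 = 0"
  "L8 a2 a4 a5 a6 a7 a8 3 2 4 = 0"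
  "L8 a2 a4 a5 a6 a7 a8 3 2 5 = 0"
  "L8 a2 a4 a5 a6 a7 a8 3 2 6 = ((-1) * a4)"
  "L8 a2 a4 a5 a6 a7 a8 3 2 7 = ((-1) * a6)"
  "L8 a2 a4 a5 a6 a7 a8 3 3 0 = 0"
  "L8 a2 a4 a5 a6 a7 a8 3 3 1 = 0"
  "L8 a2 a4 a5 a6 a7 a8 3 3 2 = 0"
  "L8 a2 a4 a5 a6 a7 a8 3 3 3 = 0"
  "L8 a2 a4 a5 a6 a7 a8 3 3 4 = 0"
  "L8 a2 a4 a5 a6 a7 a8 3 3 5 = 0"
  "L8 a2 a4 a5 a6 a7 a8 3 3 6 = 0"
  "L8 a2 a4 a5 a6 a7 a8 3 3 7 = 0"
  "L8 a2 a4 a5 a6 a7 a8 3 4 0 = 0"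
  "L8 a2 a4 a5 a6 a7 a8 3 4 1 = 0"
  "L8 a2 a4 a5 a6 a7 a8 3 4 2 = 0"
  "L8 a2 a4 a5 a6 a7 a8 3 4 3 = 0"
  "L8 a2 a4 a5 a6 a7 a8 3 4 4 = 0"
  "L8 a2 a4 a5 a6 a7 a8 3 4 5 = 0"
  "L8 a2 a4 a5 a6 a7 a8 3 4 6 = 0"
  "L8 a2 a4 a5 a6 a7 a8 3 4 7 = 0"
  "L8 a2 a4 a5 a6 a7 a8 3 5 0 = 0"
  "L8 a2 a4 a5 a6 a7 a8 3 5 1 = 0"
  "L8 a2 a4 a5 a6 a7 a8 3 5 2 = 0"
  "L8 a2 a4 a5 a6 a7 a8 3 5 3 = 0"
  "L8 a2 a4 a5 a6 a7 a8 3 5 4 = 0"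
  "L8 a2 a4 a5 a6 a7 a8 3 5 5 = 0"
  "L8 a2 a4 a5 a6 a7 a8 3 5 6 = 0"
  "L8 a2 a4 a5 a6 a7 a8 3 5 7 = 0"
  "L8 a2 a4 a5 a6 a7 a8 3 6 0 = 0"
  "L8 a2 a4 a5 a6 a7 a8 3 6 1 = 0"
  "L8 a2 a4 a5 a6 a7 a8 3 6 2 = 0"
  "L8 a2 a4 a5 a6 a7 a8 3 6 3 = 0"
  "L8 a2 a4 a5 a6 a7 a8 3 6 4 = 0"
  "L8 a2 a4 a5 a6 a7 a8 3 6 5 = 0"
  "L8 a2 a4 a5 a6 a7 a8 3 6 6 = 0"
  "L8 a2 a4 a5 a6 a7 a8 3 6 7 = 0"
  "L8 a2 a4 a5 a6 a7 a8 3 7 0 = 0"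
  "L8 a2 a4 a5 a6 a7 a8 3 7 1 = 0"
  "L8 a2 a4 a5 a6 a7 a8 3 7 2 = 0"
  "L8 a2 a4 a5 a6 a7 a8 3 7 3 = 0"
  "L8 a2 a4 a5 a6 a7 a8 3 7 4 = 0"
  "L8 a2 a4 a5 a6 a7 a8 3 7 5 = 0"
  "L8 a2 a4 a5 a6 a7 a8 3 7 6 = 0"
  "L8 a2 a4 a5 a6 a7 a8 3 7 7 = 0"
  "L8 a2 a4 a5 a6 a7 a8 4 0 0 = 0"
  "L8 a2 a4 a5 a6 a7 a8 4 0 1 = 0"
  "L8 a2 a4 a5 a6 a7 a8 4 0 2 = 0"
  "L8 a2 a4 a5 a6 a7 a8 4 0 3 = 0"
  "L8 a2 a4 a5 a6 a7 a8 4 0 4 = 0"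
  "L8 a2 a4 a5 a6 a7 a8 4 0 5 = ((-1))"
  "L8 a2 a4 a5 a6 a7 a8 4 0 6 = 0"
  "L8 a2 a4 a5 a6 a7 a8 4 0 7 = 0"
  "L8 a2 a4 a5 a6 a7 a8 4 1 0 = 0"
  "L8 a2 a4 a5 a6 a7 a8 4 1 1 = 0"
  "L8 a2 a4 a5 a6 a7 a8 4 1 2 = 0"
  "L8 a2 a4 a5 a6 a7 a8 4 1 3 = 0"
  "L8 a2 a4 a5 a6 a7 a8 4 1 4 = 0"
  "L8 a2 a4 a5 a6 a7 a8 4 1 5 = 0"
  "L8 a2 a4 a5 a6 a7 a8 4 1 6 = ((-1) * a4 + (-1) * a2)"
  "L8 a2 a4 a5 a6 a7 a8 4 1 7 = ((-1) * a5)"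
  "L8 a2 a4 a5 a6 a7 a8 4 2 0 = 0"
  "L8 a2 a4 a5 a6 a7 a8 4 2 1 = 0"
  "L8 a2 a4 a5 a6 a7 a8 4 2 2 = 0"
  "L8 a2 a4 a5 a6 a7 a8 4 2 3 = 0"
  "L8 a2 a4 a5 a6 a7 a8 4 2 4 = 0"
  "L8 a2 a4 a5 a6 a7 a8 4 2 5 = 0"
  "L8 a2 a4 a5 a6 a7 a8 4 2 6 = 0"
  "L8 a2 a4 a5 a6 a7 a8 4 2 7 = ((-1) * a4)"
  "L8 a2 a4 a5 a6 a7 a8 4 3 0 = 0"
  "L8 a2 a4 a5 a6 a7 a8 4 3 1 = 0"
  "L8 a2 a4 a5 a6 a7 a8 4 3 2 = 0"
  "L8 a2 a4 a5 a6 a7 a8 4 3 3 = 0"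
  "L8 a2 a4 a5 a6 a7 a8 4 3 4 = 0"
  "L8 a2 a4 a5 a6 a7 a8 4 3 5 = 0"
  "L8 a2 a4 a5 a6 a7 a8 4 3 6 = 0"
  "L8 a2 a4 a5 a6 a7 a8 4 3 7 = 0"
  "L8 a2 a4 a5 a6 a7 a8 4 4 0 = 0"
  "L8 a2 a4 a5 a6 a7 a8 4 4 1 = 0"
  "L8 a2 a4 a5 a6 a7 a8 4 4 2 = 0"
  "L8 a2 a4 a5 a6 a7 a8 4 4 3 = 0"
  "L8 a2 a4 a5 a6 a7 a8 4 4 4 = 0"
  "L8 a2 a4 a5 a6 a7 a8 4 4 5 = 0"
  "L8 a2 a4 a5 a6 a7 a8 4 4 6 = 0"
  "L8 a2 a4 a5 a6 a7 a8 4 4 7 = 0"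
  "L8 a2 a4 a5 a6 a7 a8 4 5 0 = 0"
  "L8 a2 a4 a5 a6 a7 a8 4 5 1 = 0"
  "L8 a2 a4 a5 a6 a7 a8 4 5 2 = 0"
  "L8 a2 a4 a5 a6 a7 a8 4 5 3 = 0"
  "L8 a2 a4 a5 a6 a7 a8 4 5 4 = 0"
  "L8 a2 a4 a5 a6 a7 a8 4 5 5 = 0"
  "L8 a2 a4 a5 a6 a7 a8 4 5 6 = 0"
  "L8 a2 a4 a5 a6 a7 a8 4 5 7 = 0"
  "L8 a2 a4 a5 a6 a7 a8 4 6 0 = 0"
  "L8 a2 a4 a5 a6 a7 a8 4 6 1 = 0"
  "L8 a2 a4 a5 a6 a7 a8 4 6 2 = 0"
  "L8 a2 a4 a5 a6 a7 a8 4 6 3 = 0"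
  "L8 a2 a4 a5 a6 a7 a8 4 6 4 = 0"
  "L8 a2 a4 a5 a6 a7 a8 4 6 5 = 0"
  "L8 a2 a4 a5 a6 a7 a8 4 6 6 = 0"
  "L8 a2 a4 a5 a6 a7 a8 4 6 7 = 0"
  "L8 a2 a4 a5 a6 a7 a8 4 7 0 = 0"
  "L8 a2 a4 a5 a6 a7 a8 4 7 1 = 0"
  "L8 a2 a4 a5 a6 a7 a8 4 7 2 = 0"
  "L8 a2 a4 a5 a6 a7 a8 4 7 3 = 0"
  "L8 a2 a4 a5 a6 a7 a8 4 7 4 = 0"
  "L8 a2 a4 a5 a6 a7 a8 4 7 5 = 0"
  "L8 a2 a4 a5 a6 a7 a8 4 7 6 = 0"
  "L8 a2 a4 a5 a6 a7 a8 4 7 7 = 0"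
  "L8 a2 a4 a5 a6 a7 a8 5 0 0 = 0"
  "L8 a2 a4 a5 a6 a7 a8 5 0 1 = 0"
  "L8 a2 a4 a5 a6 a7 a8 5 0 2 = 0"
  "L8 a2 a4 a5 a6 a7 a8 5 0 3 = 0"
  "L8 a2 a4 a5 a6 a7 a8 5 0 4 = 0"
  "L8 a2 a4 a5 a6 a7 a8 5 0 5 = 0"
  "L8 a2 a4 a5 a6 a7 a8 5 0 6 = ((-1))"
  "L8 a2 a4 a5 a6 a7 a8 5 0 7 = 0"
  "L8 a2 a4 a5 a6 a7 a8 5 1 0 = 0"
  "L8 a2 a4 a5 a6 a7 a8 5 1 1 = 0"
  "L8 a2 a4 a5 a6 a7 a8 5 1 2 = 0"
  "L8 a2 a4 a5 a6 a7 a8 5 1 3 = 0"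
  "L8 a2 a4 a5 a6 a7 a8 5 1 4 = 0"
  "L8 a2 a4 a5 a6 a7 a8 5 1 5 = 0"
  "L8 a2 a4 a5 a6 a7 a8 5 1 6 = 0"
  "L8 a2 a4 a5 a6 a7 a8 5 1 7 = ((-1) * a2)"
  "L8 a2 a4 a5 a6 a7 a8 5 2 0 = 0"
  "L8 a2 a4 a5 a6 a7 a8 5 2 1 = 0"
  "L8 a2 a4 a5 a6 a7 a8 5 2 2 = 0"
  "L8 a2 a4 a5 a6 a7 a8 5 2 3 = 0"
  "L8 a2 a4 a5 a6 a7 a8 5 2 4 = 0"
  "L8 a2 a4 a5 a6 a7 a8 5 2 5 = 0"
  "L8 a2 a4 a5 a6 a7 a8 5 2 6 = 0"
  "L8 a2 a4 a5 a6 a7 a8 5 2 7 = 0"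
  "L8 a2 a4 a5 a6 a7 a8 5 3 0 = 0"
  "L8 a2 a4 a5 a6 a7 a8 5 3 1 = 0"
  "L8 a2 a4 a5 a6 a7 a8 5 3 2 = 0"
  "L8 a2 a4 a5 a6 a7 a8 5 3 3 = 0"
  "L8 a2 a4 a5 a6 a7 a8 5 3 4 = 0"
  "L8 a2 a4 a5 a6 a7 a8 5 3 5 = 0"
  "L8 a2 a4 a5 a6 a7 a8 5 3 6 = 0"
  "L8 a2 a4 a5 a6 a7 a8 5 3 7 = 0"
  "L8 a2 a4 a5 a6 a7 a8 5 4 0 = 0"
  "L8 a2 a4 a5 a6 a7 a8 5 4 1 = 0"
  "L8 a2 a4 a5 a6 a7 a8 5 4 2 = 0"
  "L8 a2 a4 a5 a6 a7 a8 5 4 3 = 0"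
  "L8 a2 a4 a5 a6 a7 a8 5 4 4 = 0"
  "L8 a2 a4 a5 a6 a7 a8 5 4 5 = 0"
  "L8 a2 a4 a5 a6 a7 a8 5 4 6 = 0"
  "L8 a2 a4 a5 a6 a7 a8 5 4 7 = 0"
  "L8 a2 a4 a5 a6 a7 a8 5 5 0 = 0"
  "L8 a2 a4 a5 a6 a7 a8 5 5 1 = 0"
  "L8 a2 a4 a5 a6 a7 a8 5 5 2 = 0"
  "L8 a2 a4 a5 a6 a7 a8 5 5 3 = 0"
  "L8 a2 a4 a5 a6 a7 a8 5 5 4 = 0"
  "L8 a2 a4 a5 a6 a7 a8 5 5 5 = 0"
  "L8 a2 a4 a5 a6 a7 a8 5 5 6 = 0"
  "L8 a2 a4 a5 a6 a7 a8 5 5 7 = 0"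
  "L8 a2 a4 a5 a6 a7 a8 5 6 0 = 0"
  "L8 a2 a4 a5 a6 a7 a8 5 6 1 = 0"
  "L8 a2 a4 a5 a6 a7 a8 5 6 2 = 0"
  "L8 a2 a4 a5 a6 a7 a8 5 6 3 = 0"
  "L8 a2 a4 a5 a6 a7 a8 5 6 4 = 0"
  "L8 a2 a4 a5 a6 a7 a8 5 6 5 = 0"
  "L8 a2 a4 a5 a6 a7 a8 5 6 6 = 0"
  "L8 a2 a4 a5 a6 a7 a8 5 6 7 = 0"
  "L8 a2 a4 a5 a6 a7 a8 5 7 0 = 0"
  "L8 a2 a4 a5 a6 a7 a8 5 7 1 = 0"
  "L8 a2 a4 a5 a6 a7 a8 5 7 2 = 0"
  "L8 a2 a4 a5 a6 a7 a8 5 7 3 = 0"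
  "L8 a2 a4 a5 a6 a7 a8 5 7 4 = 0"
  "L8 a2 a4 a5 a6 a7 a8 5 7 5 = 0"
  "L8 a2 a4 a5 a6 a7 a8 5 7 6 = 0"
  "L8 a2 a4 a5 a6 a7 a8 5 7 7 = 0"
  "L8 a2 a4 a5 a6 a7 a8 6 0 0 = 0"
  "L8 a2 a4 a5 a6 a7 a8 6 0 1 = 0"
  "L8 a2 a4 a5 a6 a7 a8 6 0 2 = 0"
  "L8 a2 a4 a5 a6 a7 a8 6 0 3 = 0"
  "L8 a2 a4 a5 a6 a7 a8 6 0 4 = 0"
  "L8 a2 a4 a5 a6 a7 a8 6 0 5 = 0"
  "L8 a2 a4 a5 a6 a7 a8 6 0 6 = 0"
  "L8 a2 a4 a5 a6 a7 a8 6 0 7 = ((-1))"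
  "L8 a2 a4 a5 a6 a7 a8 6 1 0 = 0"
  "L8 a2 a4 a5 a6 a7 a8 6 1 1 = 0"
  "L8 a2 a4 a5 a6 a7 a8 6 1 2 = 0"
  "L8 a2 a4 a5 a6 a7 a8 6 1 3 = 0"
  "L8 a2 a4 a5 a6 a7 a8 6 1 4 = 0"
  "L8 a2 a4 a5 a6 a7 a8 6 1 5 = 0"
  "L8 a2 a4 a5 a6 a7 a8 6 1 6 = 0"
  "L8 a2 a4 a5 a6 a7 a8 6 1 7 = 0"
  "L8 a2 a4 a5 a6 a7 a8 6 2 0 = 0"
  "L8 a2 a4 a5 a6 a7 a8 6 2 1 = 0"
  "L8 a2 a4 a5 a6 a7 a8 6 2 2 = 0"
  "L8 a2 a4 a5 a6 a7 a8 6 2 3 = 0"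
  "L8 a2 a4 a5 a6 a7 a8 6 2 4 = 0"
  "L8 a2 a4 a5 a6 a7 a8 6 2 5 = 0"
  "L8 a2 a4 a5 a6 a7 a8 6 2 6 = 0"
  "L8 a2 a4 a5 a6 a7 a8 6 2 7 = 0"
  "L8 a2 a4 a5 a6 a7 a8 6 3 0 = 0"
  "L8 a2 a4 a5 a6 a7 a8 6 3 1 = 0"
  "L8 a2 a4 a5 a6 a7 a8 6 3 2 = 0"
  "L8 a2 a4 a5 a6 a7 a8 6 3 3 = 0"
  "L8 a2 a4 a5 a6 a7 a8 6 3 4 = 0"
  "L8 a2 a4 a5 a6 a7 a8 6 3 5 = 0"
  "L8 a2 a4 a5 a6 a7 a8 6 3 6 = 0"
  "L8 a2 a4 a5 a6 a7 a8 6 3 7 = 0"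
  "L8 a2 a4 a5 a6 a7 a8 6 4 0 = 0"
  "L8 a2 a4 a5 a6 a7 a8 6 4 1 = 0"
  "L8 a2 a4 a5 a6 a7 a8 6 4 2 = 0"
  "L8 a2 a4 a5 a6 a7 a8 6 4 3 = 0"
  "L8 a2 a4 a5 a6 a7 a8 6 4 4 = 0"
  "L8 a2 a4 a5 a6 a7 a8 6 4 5 = 0"
  "L8 a2 a4 a5 a6 a7 a8 6 4 6 = 0"
  "L8 a2 a4 a5 a6 a7 a8 6 4 7 = 0"
  "L8 a2 a4 a5 a6 a7 a8 6 5 0 = 0"
  "L8 a2 a4 a5 a6 a7 a8 6 5 1 = 0"
  "L8 a2 a4 a5 a6 a7 a8 6 5 2 = 0"
  "L8 a2 a4 a5 a6 a7 a8 6 5 3 = 0"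
  "L8 a2 a4 a5 a6 a7 a8 6 5 4 = 0"
  "L8 a2 a4 a5 a6 a7 a8 6 5 5 = 0"
  "L8 a2 a4 a5 a6 a7 a8 6 5 6 = 0"
  "L8 a2 a4 a5 a6 a7 a8 6 5 7 = 0"
  "L8 a2 a4 a5 a6 a7 a8 6 6 0 = 0"
  "L8 a2 a4 a5 a6 a7 a8 6 6 1 = 0"
  "L8 a2 a4 a5 a6 a7 a8 6 6 2 = 0"
  "L8 a2 a4 a5 a6 a7 a8 6 6 3 = 0"
  "L8 a2 a4 a5 a6 a7 a8 6 6 4 = 0"
  "L8 a2 a4 a5 a6 a7 a8 6 6 5 = 0"
  "L8 a2 a4 a5 a6 a7 a8 6 6 6 = 0"
  "L8 a2 a4 a5 a6 a7 a8 6 6 7 = 0"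
  "L8 a2 a4 a5 a6 a7 a8 6 7 0 = 0"
  "L8 a2 a4 a5 a6 a7 a8 6 7 1 = 0"
  "L8 a2 a4 a5 a6 a7 a8 6 7 2 = 0"
  "L8 a2 a4 a5 a6 a7 a8 6 7 3 = 0"
  "L8 a2 a4 a5 a6 a7 a8 6 7 4 = 0"
  "L8 a2 a4 a5 a6 a7 a8 6 7 5 = 0"
  "L8 a2 a4 a5 a6 a7 a8 6 7 6 = 0"
  "L8 a2 a4 a5 a6 a7 a8 6 7 7 = 0"
  "L8 a2 a4 a5 a6 a7 a8 7 0 0 = 0"
  "L8 a2 a4 a5 a6 a7 a8 7 0 1 = 0"
  "L8 a2 a4 a5 a6 a7 a8 7 0 2 = 0"
  "L8 a2 a4 a5 a6 a7 a8 7 0 3 = 0"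
  "L8 a2 a4 a5 a6 a7 a8 7 0 4 = 0"
  "L8 a2 a4 a5 a6 a7 a8 7 0 5 = 0"
  "L8 a2 a4 a5 a6 a7 a8 7 0 6 = 0"
  "L8 a2 a4 a5 a6 a7 a8 7 0 7 = 0"
  "L8 a2 a4 a5 a6 a7 a8 7 1 0 = 0"
  "L8 a2 a4 a5 a6 a7 a8 7 1 1 = 0"
  "L8 a2 a4 a5 a6 a7 a8 7 1 2 = 0"
  "L8 a2 a4 a5 a6 a7 a8 7 1 3 = 0"
  "L8 a2 a4 a5 a6 a7 a8 7 1 4 = 0"
  "L8 a2 a4 a5 a6 a7 a8 7 1 5 = 0"
  "L8 a2 a4 a5 a6 a7 a8 7 1 6 = 0"
  "L8 a2 a4 a5 a6 a7 a8 7 1 7 = 0"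
  "L8 a2 a4 a5 a6 a7 a8 7 2 0 = 0"
  "L8 a2 a4 a5 a6 a7 a8 7 2 1 = 0"
  "L8 a2 a4 a5 a6 a7 a8 7 2 2 = 0"
  "L8 a2 a4 a5 a6 a7 a8 7 2 3 = 0"
  "L8 a2 a4 a5 a6 a7 a8 7 2 4 = 0"
  "L8 a2 a4 a5 a6 a7 a8 7 2 5 = 0"
  "L8 a2 a4 a5 a6 a7 a8 7 2 6 = 0"
  "L8 a2 a4 a5 a6 a7 a8 7 2 7 = 0"
  "L8 a2 a4 a5 a6 a7 a8 7 3 0 = 0"
  "L8 a2 a4 a5 a6 a7 a8 7 3 1 = 0"
  "L8 a2 a4 a5 a6 a7 a8 7 3 2 = 0"
  "L8 a2 a4 a5 a6 a7 a8 7 3 3 = 0"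
  "L8 a2 a4 a5 a6 a7 a8 7 3 4 = 0"
  "L8 a2 a4 a5 a6 a7 a8 7 3 5 = 0"
  "L8 a2 a4 a5 a6 a7 a8 7 3 6 = 0"
  "L8 a2 a4 a5 a6 a7 a8 7 3 7 = 0"
  "L8 a2 a4 a5 a6 a7 a8 7 4 0 = 0"
  "L8 a2 a4 a5 a6 a7 a8 7 4 1 = 0"
  "L8 a2 a4 a5 a6 a7 a8 7 4 2 = 0"
  "L8 a2 a4 a5 a6 a7 a8 7 4 3 = 0"
  "L8 a2 a4 a5 a6 a7 a8 7 4 4 = 0"
  "L8 a2 a4 a5 a6 a7 a8 7 4 5 = 0"
  "L8 a2 a4 a5 a6 a7 a8 7 4 6 = 0"
  "L8 a2 a4 a5 a6 a7 a8 7 4 7 = 0"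
  "L8 a2 a4 a5 a6 a7 a8 7 5 0 = 0"
  "L8 a2 a4 a5 a6 a7 a8 7 5 1 = 0"
  "L8 a2 a4 a5 a6 a7 a8 7 5 2 = 0"
  "L8 a2 a4 a5 a6 a7 a8 7 5 3 = 0"
  "L8 a2 a4 a5 a6 a7 a8 7 5 4 = 0"
  "L8 a2 a4 a5 a6 a7 a8 7 5 5 = 0"
  "L8 a2 a4 a5 a6 a7 a8 7 5 6 = 0"
  "L8 a2 a4 a5 a6 a7 a8 7 5 7 = 0"
  "L8 a2 a4 a5 a6 a7 a8 7 6 0 = 0"
  "L8 a2 a4 a5 a6 a7 a8 7 6 1 = 0"
  "L8 a2 a4 a5 a6 a7 a8 7 6 2 = 0"
  "L8 a2 a4 a5 a6 a7 a8 7 6 3 = 0"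
  "L8 a2 a4 a5 a6 a7 a8 7 6 4 = 0"
  "L8 a2 a4 a5 a6 a7 a8 7 6 5 = 0"
  "L8 a2 a4 a5 a6 a7 a8 7 6 6 = 0"
  "L8 a2 a4 a5 a6 a7 a8 7 6 7 = 0"
  "L8 a2 a4 a5 a6 a7 a8 7 7 0 = 0"
  "L8 a2 a4 a5 a6 a7 a8 7 7 1 = 0"
  "L8 a2 a4 a5 a6 a7 a8 7 7 2 = 0"
  "L8 a2 a4 a5 a6 a7 a8 7 7 3 = 0"
  "L8 a2 a4 a5 a6 a7 a8 7 7 4 = 0"
  "L8 a2 a4 a5 a6 a7 a8 7 7 5 = 0"
  "L8 a2 a4 a5 a6 a7 a8 7 7 6 = 0"
  "L8 a2 a4 a5 a6 a7 a8 7 7 7 = 0"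
  by (simp_all add: L8_def F8_def F8_up_def basis_vec_def Let_def)
definition MS3 :: "'a::field \<Rightarrow> 'a::field \<Rightarrow> 'a::field \<Rightarrow> 'a::field \<Rightarrow> 'a::field \<Rightarrow> 'a::field \<Rightarrow> 'a::field \<Rightarrow> nat \<Rightarrow> nat \<Rightarrow> 'a" where
 "MS3 a2 a4 a5 a6 a7 a8 t k i = (if k = i then (if k < 8 then 1 else 0)
     else if k = 3 \<and> i = 1 then (t)
     else if k = 4 \<and> i = 2 then (t)
     else if k = 5 \<and> i = 3 then (t)
     else if k = 6 \<and> i = 4 then (t)
     else if k = 7 \<and> i = 5 then (t)
     else 0)"
lemma MS3_tab:
  fixes a2 a4 a5 a6 a7 a8 t :: "'a::field"
  shows
  "MS3 a2 a4 a5 a6 a7 a8 t 0 0 = (1)"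
  "MS3 a2 a4 a5 a6 a7 a8 t 0 1 = 0"
  "MS3 a2 a4 a5 a6 a7 a8 t 0 2 = 0"
  "MS3 a2 a4 a5 a6 a7 a8 t 0 3 = 0"
  "MS3 a2 a4 a5 a6 a7 a8 t 0 4 = 0"
  "MS3 a2 a4 a5 a6 a7 a8 t 0 5 = 0"
  "MS3 a2 a4 a5 a6 a7 a8 t 0 6 = 0"
  "MS3 a2 a4 a5 a6 a7 a8 t 0 7 = 0"
  "MS3 a2 a4 a5 a6 a7 a8 t 1 0 = 0"
  "MS3 a2 a4 a5 a6 a7 a8 t 1 1 = (1)"
  "MS3 a2 a4 a5 a6 a7 a8 t 1 2 = 0"
  "MS3 a2 a4 a5 a6 a7 a8 t 1 3 = 0"
  "MS3 a2 a4 a5 a6 a7 a8 t 1 4 = 0"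
  "MS3 a2 a4 a5 a6 a7 a8 t 1 5 = 0"
  "MS3 a2 a4 a5 a6 a7 a8 t 1 6 = 0"
  "MS3 a2 a4 a5 a6 a7 a8 t 1 7 = 0"
  "MS3 a2 a4 a5 a6 a7 a8 t 2 0 = 0"
  "MS3 a2 a4 a5 a6 a7 a8 t 2 1 = 0"
  "MS3 a2 a4 a5 a6 a7 a8 t 2 2 = (1)"
  "MS3 a2 a4 a5 a6 a7 a8 t 2 3 = 0"
  "MS3 a2 a4 a5 a6 a7 a8 t 2 4 = 0"
  "MS3 a2 a4 a5 a6 a7 a8 t 2 5 = 0"
  "MS3 a2 a4 a5 a6 a7 a8 t 2 6 = 0"
  "MS3 a2 a4 a5 a6 a7 a8 t 2 7 = 0"
  "MS3 a2 a4 a5 a6 a7 a8 t 3 0 = 0"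
  "MS3 a2 a4 a5 a6 a7 a8 t 3 1 = (t)"
  "MS3 a2 a4 a5 a6 a7 a8 t 3 2 = 0"
  "MS3 a2 a4 a5 a6 a7 a8 t 3 3 = (1)"
  "MS3 a2 a4 a5 a6 a7 a8 t 3 4 = 0"
  "MS3 a2 a4 a5 a6 a7 a8 t 3 5 = 0"
  "MS3 a2 a4 a5 a6 a7 a8 t 3 6 = 0"
  "MS3 a2 a4 a5 a6 a7 a8 t 3 7 = 0"
  "MS3 a2 a4 a5 a6 a7 a8 t 4 0 = 0"
  "MS3 a2 a4 a5 a6 a7 a8 t 4 1 = 0"
  "MS3 a2 a4 a5 a6 a7 a8 t 4 2 = (t)"
  "MS3 a2 a4 a5 a6 a7 a8 t 4 3 = 0"
  "MS3 a2 a4 a5 a6 a7 a8 t 4 4 = (1)"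
  "MS3 a2 a4 a5 a6 a7 a8 t 4 5 = 0"
  "MS3 a2 a4 a5 a6 a7 a8 t 4 6 = 0"
  "MS3 a2 a4 a5 a6 a7 a8 t 4 7 = 0"
  "MS3 a2 a4 a5 a6 a7 a8 t 5 0 = 0"
  "MS3 a2 a4 a5 a6 a7 a8 t 5 1 = 0"
  "MS3 a2 a4 a5 a6 a7 a8 t 5 2 = 0"
  "MS3 a2 a4 a5 a6 a7 a8 t 5 3 = (t)"
  "MS3 a2 a4 a5 a6 a7 a8 t 5 4 = 0"
  "MS3 a2 a4 a5 a6 a7 a8 t 5 5 = (1)"
  "MS3 a2 a4 a5 a6 a7 a8 t 5 6 = 0"
  "MS3 a2 a4 a5 a6 a7 a8 t 5 7 = 0"
  "MS3 a2 a4 a5 a6 a7 a8 t 6 0 = 0"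
  "MS3 a2 a4 a5 a6 a7 a8 t 6 1 = 0"
  "MS3 a2 a4 a5 a6 a7 a8 t 6 2 = 0"
  "MS3 a2 a4 a5 a6 a7 a8 t 6 3 = 0"
  "MS3 a2 a4 a5 a6 a7 a8 t 6 4 = (t)"
  "MS3 a2 a4 a5 a6 a7 a8 t 6 5 = 0"
  "MS3 a2 a4 a5 a6 a7 a8 t 6 6 = (1)"
  "MS3 a2 a4 a5 a6 a7 a8 t 6 7 = 0"
  "MS3 a2 a4 a5 a6 a7 a8 t 7 0 = 0"
  "MS3 a2 a4 a5 a6 a7 a8 t 7 1 = 0"
  "MS3 a2 a4 a5 a6 a7 a8 t 7 2 = 0"
  "MS3 a2 a4 a5 a6 a7 a8 t 7 3 = 0"
  "MS3 a2 a4 a5 a6 a7 a8 t 7 4 = 0"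
  "MS3 a2 a4 a5 a6 a7 a8 t 7 5 = (t)"
  "MS3 a2 a4 a5 a6 a7 a8 t 7 6 = 0"
  "MS3 a2 a4 a5 a6 a7 a8 t 7 7 = (1)"
  by (simp_all add: MS3_def)
lemma MS3_iso:
  fixes a2 a4 a5 a6 a7 a8 t b5 b6 b7 b8 :: "'a::field"
  assumes "b5 = (a5)" "b6 = (a6)" "b7 = (a7 + (-2) * a4 * t)" "b8 = (a8 + (-2) * a6 * t)"
  shows "lie_iso8 (L8 a2 a4 b5 b6 b7 b8) (L8 a2 a4 a5 a6 a7 a8)"
proof (rule iso_matrix[where M="MS3 a2 a4 a5 a6 a7 a8 t"])
  show "\<And>k i. k < i \<Longrightarrow> MS3 a2 a4 a5 a6 a7 a8 t k i = 0" by (auto simp: MS3_def)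
  show "\<And>i. i < 8 \<Longrightarrow> MS3 a2 a4 a5 a6 a7 a8 t i i \<noteq> 0" by (simp add: MS3_def)
  show "\<And>p q k. 8 \<le> k \<Longrightarrow> L8 a2 a4 a5 a6 a7 a8 p q k = 0" by (rule L8_van)
  show "\<forall>i<8. \<forall>j<8. \<forall>k<8. (\<Sum>m<8. MS3 a2 a4 a5 a6 a7 a8 t k m * L8 a2 a4 b5 b6 b7 b8 i j m)
     = (\<Sum>p<8. \<Sum>q<8. MS3 a2 a4 a5 a6 a7 a8 t p i * MS3 a2 a4 a5 a6 a7 a8 t q j * L8 a2 a4 a5 a6 a7 a8 p q k)"
    unfolding all8 sum8 MS3_tab L8_tab assms by (simp add: algebra_simps)
qed
definition MS4 :: "'a::field \<Rightarrow> 'a::field \<Rightarrow> 'a::field \<Rightarrow> 'a::field \<Rightarrow> 'a::field \<Rightarrow> 'a::field \<Rightarrow> 'a::field \<Rightarrow> nat \<Rightarrow> nat \<Rightarrow> 'a" where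
 "MS4 a2 a4 a5 a6 a7 a8 t k i = (if k = i then (if k < 8 then 1 else 0)
     else if k = 4 \<and> i = 1 then (t)
     else if k = 5 \<and> i = 2 then (t)
     else if k = 6 \<and> i = 3 then (t)
     else if k = 7 \<and> i = 4 then (t)
     else 0)"
lemma MS4_tab:
  fixes a2 a4 a5 a6 a7 a8 t :: "'a::field"
  shows
  "MS4 a2 a4 a5 a6 a7 a8 t 0 0 = (1)"
  "MS4 a2 a4 a5 a6 a7 a8 t 0 1 = 0"
  "MS4 a2 a4 a5 a6 a7 a8 t 0 2 = 0"
  "MS4 a2 a4 a5 a6 a7 a8 t 0 3 = 0"
  "MS4 a2 a4 a5 a6 a7 a8 t 0 4 = 0"
  "MS4 a2 a4 a5 a6 a7 a8 t 0 5 = 0"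
  "MS4 a2 a4 a5 a6 a7 a8 t 0 6 = 0"
  "MS4 a2 a4 a5 a6 a7 a8 t 0 7 = 0"
  "MS4 a2 a4 a5 a6 a7 a8 t 1 0 = 0"
  "MS4 a2 a4 a5 a6 a7 a8 t 1 1 = (1)"
  "MS4 a2 a4 a5 a6 a7 a8 t 1 2 = 0"
  "MS4 a2 a4 a5 a6 a7 a8 t 1 3 = 0"
  "MS4 a2 a4 a5 a6 a7 a8 t 1 4 = 0"
  "MS4 a2 a4 a5 a6 a7 a8 t 1 5 = 0"
  "MS4 a2 a4 a5 a6 a7 a8 t 1 6 = 0"
  "MS4 a2 a4 a5 a6 a7 a8 t 1 7 = 0"
  "MS4 a2 a4 a5 a6 a7 a8 t 2 0 = 0"
  "MS4 a2 a4 a5 a6 a7 a8 t 2 1 = 0"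
  "MS4 a2 a4 a5 a6 a7 a8 t 2 2 = (1)"
  "MS4 a2 a4 a5 a6 a7 a8 t 2 3 = 0"
  "MS4 a2 a4 a5 a6 a7 a8 t 2 4 = 0"
  "MS4 a2 a4 a5 a6 a7 a8 t 2 5 = 0"
  "MS4 a2 a4 a5 a6 a7 a8 t 2 6 = 0"
  "MS4 a2 a4 a5 a6 a7 a8 t 2 7 = 0"
  "MS4 a2 a4 a5 a6 a7 a8 t 3 0 = 0"
  "MS4 a2 a4 a5 a6 a7 a8 t 3 1 = 0"
  "MS4 a2 a4 a5 a6 a7 a8 t 3 2 = 0"
  "MS4 a2 a4 a5 a6 a7 a8 t 3 3 = (1)"
  "MS4 a2 a4 a5 a6 a7 a8 t 3 4 = 0"
  "MS4 a2 a4 a5 a6 a7 a8 t 3 5 = 0"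
  "MS4 a2 a4 a5 a6 a7 a8 t 3 6 = 0"
  "MS4 a2 a4 a5 a6 a7 a8 t 3 7 = 0"
  "MS4 a2 a4 a5 a6 a7 a8 t 4 0 = 0"
  "MS4 a2 a4 a5 a6 a7 a8 t 4 1 = (t)"
  "MS4 a2 a4 a5 a6 a7 a8 t 4 2 = 0"
  "MS4 a2 a4 a5 a6 a7 a8 t 4 3 = 0"
  "MS4 a2 a4 a5 a6 a7 a8 t 4 4 = (1)"
  "MS4 a2 a4 a5 a6 a7 a8 t 4 5 = 0"
  "MS4 a2 a4 a5 a6 a7 a8 t 4 6 = 0"
  "MS4 a2 a4 a5 a6 a7 a8 t 4 7 = 0"
  "MS4 a2 a4 a5 a6 a7 a8 t 5 0 = 0"
  "MS4 a2 a4 a5 a6 a7 a8 t 5 1 = 0"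
  "MS4 a2 a4 a5 a6 a7 a8 t 5 2 = (t)"
  "MS4 a2 a4 a5 a6 a7 a8 t 5 3 = 0"
  "MS4 a2 a4 a5 a6 a7 a8 t 5 4 = 0"
  "MS4 a2 a4 a5 a6 a7 a8 t 5 5 = (1)"
  "MS4 a2 a4 a5 a6 a7 a8 t 5 6 = 0"
  "MS4 a2 a4 a5 a6 a7 a8 t 5 7 = 0"
  "MS4 a2 a4 a5 a6 a7 a8 t 6 0 = 0"
  "MS4 a2 a4 a5 a6 a7 a8 t 6 1 = 0"
  "MS4 a2 a4 a5 a6 a7 a8 t 6 2 = 0"
  "MS4 a2 a4 a5 a6 a7 a8 t 6 3 = (t)"
  "MS4 a2 a4 a5 a6 a7 a8 t 6 4 = 0"
  "MS4 a2 a4 a5 a6 a7 a8 t 6 5 = 0"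
  "MS4 a2 a4 a5 a6 a7 a8 t 6 6 = (1)"
  "MS4 a2 a4 a5 a6 a7 a8 t 6 7 = 0"
  "MS4 a2 a4 a5 a6 a7 a8 t 7 0 = 0"
  "MS4 a2 a4 a5 a6 a7 a8 t 7 1 = 0"
  "MS4 a2 a4 a5 a6 a7 a8 t 7 2 = 0"
  "MS4 a2 a4 a5 a6 a7 a8 t 7 3 = 0"
  "MS4 a2 a4 a5 a6 a7 a8 t 7 4 = (t)"
  "MS4 a2 a4 a5 a6 a7 a8 t 7 5 = 0"
  "MS4 a2 a4 a5 a6 a7 a8 t 7 6 = 0"
  "MS4 a2 a4 a5 a6 a7 a8 t 7 7 = (1)"
  by (simp_all add: MS4_def)
lemma MS4_iso:
  fixes a2 a4 a5 a6 a7 a8 t b5 b6 b7 b8 :: "'a::field"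
  assumes "b5 = (a5)" "b6 = (a6)" "b7 = (a7)" "b8 = (a8 + (-3) * a4 * t)"
  shows "lie_iso8 (L8 a2 a4 b5 b6 b7 b8) (L8 a2 a4 a5 a6 a7 a8)"
proof (rule iso_matrix[where M="MS4 a2 a4 a5 a6 a7 a8 t"])
  show "\<And>k i. k < i \<Longrightarrow> MS4 a2 a4 a5 a6 a7 a8 t k i = 0" by (auto simp: MS4_def)
  show "\<And>i. i < 8 \<Longrightarrow> MS4 a2 a4 a5 a6 a7 a8 t i i \<noteq> 0" by (simp add: MS4_def)
  show "\<And>p q k. 8 \<le> k \<Longrightarrow> L8 a2 a4 a5 a6 a7 a8 p q k = 0" by (rule L8_van)
  show "\<forall>i<8. \<forall>j<8. \<forall>k<8. (\<Sum>m<8. MS4 a2 a4 a5 a6 a7 a8 t k m * L8 a2 a4 b5 b6 b7 b8 i j m)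
     = (\<Sum>p<8. \<Sum>q<8. MS4 a2 a4 a5 a6 a7 a8 t p i * MS4 a2 a4 a5 a6 a7 a8 t q j * L8 a2 a4 a5 a6 a7 a8 p q k)"
    unfolding all8 sum8 MS4_tab L8_tab assms by (simp add: algebra_simps)
qed
definition MS2 :: "'a::field \<Rightarrow> 'a::field \<Rightarrow> 'a::field \<Rightarrow> 'a::field \<Rightarrow> 'a::field \<Rightarrow> 'a::field \<Rightarrow> 'a::field \<Rightarrow> nat \<Rightarrow> nat \<Rightarrow> 'a" where
 "MS2 a2 a4 a5 a6 a7 a8 t k i = (if k = i then (if k < 8 then 1 else 0)
     else if k = 2 \<and> i = 1 then (t)
     else if k = 3 \<and> i = 2 then (t)
     else if k = 4 \<and> i = 3 then (t)
     else if k = 5 \<and> i = 4 then (t)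
     else if k = 6 \<and> i = 5 then (t)
     else if k = 7 \<and> i = 6 then (t)
     else 0)"
lemma MS2_tab:
  fixes a2 a4 a5 a6 a7 a8 t :: "'a::field"
  shows
  "MS2 a2 a4 a5 a6 a7 a8 t 0 0 = (1)"
  "MS2 a2 a4 a5 a6 a7 a8 t 0 1 = 0"
  "MS2 a2 a4 a5 a6 a7 a8 t 0 2 = 0"
  "MS2 a2 a4 a5 a6 a7 a8 t 0 3 = 0"
  "MS2 a2 a4 a5 a6 a7 a8 t 0 4 = 0"
  "MS2 a2 a4 a5 a6 a7 a8 t 0 5 = 0"
  "MS2 a2 a4 a5 a6 a7 a8 t 0 6 = 0"
  "MS2 a2 a4 a5 a6 a7 a8 t 0 7 = 0"
  "MS2 a2 a4 a5 a6 a7 a8 t 1 0 = 0"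
  "MS2 a2 a4 a5 a6 a7 a8 t 1 1 = (1)"
  "MS2 a2 a4 a5 a6 a7 a8 t 1 2 = 0"
  "MS2 a2 a4 a5 a6 a7 a8 t 1 3 = 0"
  "MS2 a2 a4 a5 a6 a7 a8 t 1 4 = 0"
  "MS2 a2 a4 a5 a6 a7 a8 t 1 5 = 0"
  "MS2 a2 a4 a5 a6 a7 a8 t 1 6 = 0"
  "MS2 a2 a4 a5 a6 a7 a8 t 1 7 = 0"
  "MS2 a2 a4 a5 a6 a7 a8 t 2 0 = 0"
  "MS2 a2 a4 a5 a6 a7 a8 t 2 1 = (t)"
  "MS2 a2 a4 a5 a6 a7 a8 t 2 2 = (1)"
  "MS2 a2 a4 a5 a6 a7 a8 t 2 3 = 0"
  "MS2 a2 a4 a5 a6 a7 a8 t 2 4 = 0"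
  "MS2 a2 a4 a5 a6 a7 a8 t 2 5 = 0"
  "MS2 a2 a4 a5 a6 a7 a8 t 2 6 = 0"
  "MS2 a2 a4 a5 a6 a7 a8 t 2 7 = 0"
  "MS2 a2 a4 a5 a6 a7 a8 t 3 0 = 0"
  "MS2 a2 a4 a5 a6 a7 a8 t 3 1 = 0"
  "MS2 a2 a4 a5 a6 a7 a8 t 3 2 = (t)"
  "MS2 a2 a4 a5 a6 a7 a8 t 3 3 = (1)"
  "MS2 a2 a4 a5 a6 a7 a8 t 3 4 = 0"
  "MS2 a2 a4 a5 a6 a7 a8 t 3 5 = 0"
  "MS2 a2 a4 a5 a6 a7 a8 t 3 6 = 0"
  "MS2 a2 a4 a5 a6 a7 a8 t 3 7 = 0"
  "MS2 a2 a4 a5 a6 a7 a8 t 4 0 = 0"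
  "MS2 a2 a4 a5 a6 a7 a8 t 4 1 = 0"
  "MS2 a2 a4 a5 a6 a7 a8 t 4 2 = 0"
  "MS2 a2 a4 a5 a6 a7 a8 t 4 3 = (t)"
  "MS2 a2 a4 a5 a6 a7 a8 t 4 4 = (1)"
  "MS2 a2 a4 a5 a6 a7 a8 t 4 5 = 0"
  "MS2 a2 a4 a5 a6 a7 a8 t 4 6 = 0"
  "MS2 a2 a4 a5 a6 a7 a8 t 4 7 = 0"
  "MS2 a2 a4 a5 a6 a7 a8 t 5 0 = 0"
  "MS2 a2 a4 a5 a6 a7 a8 t 5 1 = 0"
  "MS2 a2 a4 a5 a6 a7 a8 t 5 2 = 0"
  "MS2 a2 a4 a5 a6 a7 a8 t 5 3 = 0"
  "MS2 a2 a4 a5 a6 a7 a8 t 5 4 = (t)"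
  "MS2 a2 a4 a5 a6 a7 a8 t 5 5 = (1)"
  "MS2 a2 a4 a5 a6 a7 a8 t 5 6 = 0"
  "MS2 a2 a4 a5 a6 a7 a8 t 5 7 = 0"
  "MS2 a2 a4 a5 a6 a7 a8 t 6 0 = 0"
  "MS2 a2 a4 a5 a6 a7 a8 t 6 1 = 0"
  "MS2 a2 a4 a5 a6 a7 a8 t 6 2 = 0"
  "MS2 a2 a4 a5 a6 a7 a8 t 6 3 = 0"
  "MS2 a2 a4 a5 a6 a7 a8 t 6 4 = 0"
  "MS2 a2 a4 a5 a6 a7 a8 t 6 5 = (t)"
  "MS2 a2 a4 a5 a6 a7 a8 t 6 6 = (1)"
  "MS2 a2 a4 a5 a6 a7 a8 t 6 7 = 0"
  "MS2 a2 a4 a5 a6 a7 a8 t 7 0 = 0"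
  "MS2 a2 a4 a5 a6 a7 a8 t 7 1 = 0"
  "MS2 a2 a4 a5 a6 a7 a8 t 7 2 = 0"
  "MS2 a2 a4 a5 a6 a7 a8 t 7 3 = 0"
  "MS2 a2 a4 a5 a6 a7 a8 t 7 4 = 0"
  "MS2 a2 a4 a5 a6 a7 a8 t 7 5 = 0"
  "MS2 a2 a4 a5 a6 a7 a8 t 7 6 = (t)"
  "MS2 a2 a4 a5 a6 a7 a8 t 7 7 = (1)"
  by (simp_all add: MS2_def)
lemma MS2_iso:
  fixes a2 a4 a5 a6 a7 a8 t b5 b6 b7 b8 :: "'a::field"
  assumes "b5 = (a5)" "b6 = (a6)" "b7 = (a7 + a4 * t * t)" "b8 = (a8 + a6 * t * t + (-1) * a4 * t * t * t)"
  shows "lie_iso8 (L8 a2 a4 b5 b6 b7 b8) (L8 a2 a4 a5 a6 a7 a8)"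
proof (rule iso_matrix[where M="MS2 a2 a4 a5 a6 a7 a8 t"])
  show "\<And>k i. k < i \<Longrightarrow> MS2 a2 a4 a5 a6 a7 a8 t k i = 0" by (auto simp: MS2_def)
  show "\<And>i. i < 8 \<Longrightarrow> MS2 a2 a4 a5 a6 a7 a8 t i i \<noteq> 0" by (simp add: MS2_def)
  show "\<And>p q k. 8 \<le> k \<Longrightarrow> L8 a2 a4 a5 a6 a7 a8 p q k = 0" by (rule L8_van)
  show "\<forall>i<8. \<forall>j<8. \<forall>k<8. (\<Sum>m<8. MS2 a2 a4 a5 a6 a7 a8 t k m * L8 a2 a4 b5 b6 b7 b8 i j m)
     = (\<Sum>p<8. \<Sum>q<8. MS2 a2 a4 a5 a6 a7 a8 t p i * MS2 a2 a4 a5 a6 a7 a8 t q j * L8 a2 a4 a5 a6 a7 a8 p q k)"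
    unfolding all8 sum8 MS2_tab L8_tab assms by (simp add: algebra_simps)
qed
definition MT1 :: "'a::field \<Rightarrow> 'a::field \<Rightarrow> 'a::field \<Rightarrow> 'a::field \<Rightarrow> 'a::field \<Rightarrow> 'a::field \<Rightarrow> 'a::field \<Rightarrow> nat \<Rightarrow> nat \<Rightarrow> 'a" where
 "MT1 a2 a4 a5 a6 a7 a8 t k i = (if k = i then (if k < 8 then 1 else 0)
     else if k = 1 \<and> i = 0 then (t)
     else if k = 4 \<and> i = 3 then (2 * a4 * t + a2 * t)
     else if k = 5 \<and> i = 3 then (a6 * t + a5 * t)
     else if k = 6 \<and> i = 3 then (a7 * t)
     else if k = 7 \<and> i = 3 then (a8 * t)
     else if k = 5 \<and> i = 4 then (4 * a4 * t + 2 * a2 * t)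
     else if k = 6 \<and> i = 4 then (2 * a6 * t + 2 * a5 * t + 2 * a4 * a4 * t * t + 3 * a2 * a4 * t * t + a2 * a2 * t * t)
     else if k = 7 \<and> i = 4 then (2 * a7 * t + 2 * a4 * a5 * t * t + a2 * a6 * t * t + 2 * a2 * a5 * t * t)
     else if k = 6 \<and> i = 5 then (5 * a4 * t + 3 * a2 * t)
     else if k = 7 \<and> i = 5 then (2 * a6 * t + 3 * a5 * t + 2 * a4 * a4 * t * t + 7 * a2 * a4 * t * t + 3 * a2 * a2 * t * t)
     else if k = 7 \<and> i = 6 then (5 * a4 * t + 4 * a2 * t)
     else 0)"
lemma MT1_tab:
  fixes a2 a4 a5 a6 a7 a8 t :: "'a::field"
  shows
  "MT1 a2 a4 a5 a6 a7 a8 t 0 0 = (1)"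
  "MT1 a2 a4 a5 a6 a7 a8 t 0 1 = 0"
  "MT1 a2 a4 a5 a6 a7 a8 t 0 2 = 0"
  "MT1 a2 a4 a5 a6 a7 a8 t 0 3 = 0"
  "MT1 a2 a4 a5 a6 a7 a8 t 0 4 = 0"
  "MT1 a2 a4 a5 a6 a7 a8 t 0 5 = 0"
  "MT1 a2 a4 a5 a6 a7 a8 t 0 6 = 0"
  "MT1 a2 a4 a5 a6 a7 a8 t 0 7 = 0"
  "MT1 a2 a4 a5 a6 a7 a8 t 1 0 = (t)"
  "MT1 a2 a4 a5 a6 a7 a8 t 1 1 = (1)"
  "MT1 a2 a4 a5 a6 a7 a8 t 1 2 = 0"
  "MT1 a2 a4 a5 a6 a7 a8 t 1 3 = 0"
  "MT1 a2 a4 a5 a6 a7 a8 t 1 4 = 0"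
  "MT1 a2 a4 a5 a6 a7 a8 t 1 5 = 0"
  "MT1 a2 a4 a5 a6 a7 a8 t 1 6 = 0"
  "MT1 a2 a4 a5 a6 a7 a8 t 1 7 = 0"
  "MT1 a2 a4 a5 a6 a7 a8 t 2 0 = 0"
  "MT1 a2 a4 a5 a6 a7 a8 t 2 1 = 0"
  "MT1 a2 a4 a5 a6 a7 a8 t 2 2 = (1)"
  "MT1 a2 a4 a5 a6 a7 a8 t 2 3 = 0"
  "MT1 a2 a4 a5 a6 a7 a8 t 2 4 = 0"
  "MT1 a2 a4 a5 a6 a7 a8 t 2 5 = 0"
  "MT1 a2 a4 a5 a6 a7 a8 t 2 6 = 0"
  "MT1 a2 a4 a5 a6 a7 a8 t 2 7 = 0"
  "MT1 a2 a4 a5 a6 a7 a8 t 3 0 = 0"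
  "MT1 a2 a4 a5 a6 a7 a8 t 3 1 = 0"
  "MT1 a2 a4 a5 a6 a7 a8 t 3 2 = 0"
  "MT1 a2 a4 a5 a6 a7 a8 t 3 3 = (1)"
  "MT1 a2 a4 a5 a6 a7 a8 t 3 4 = 0"
  "MT1 a2 a4 a5 a6 a7 a8 t 3 5 = 0"
  "MT1 a2 a4 a5 a6 a7 a8 t 3 6 = 0"
  "MT1 a2 a4 a5 a6 a7 a8 t 3 7 = 0"
  "MT1 a2 a4 a5 a6 a7 a8 t 4 0 = 0"
  "MT1 a2 a4 a5 a6 a7 a8 t 4 1 = 0"
  "MT1 a2 a4 a5 a6 a7 a8 t 4 2 = 0"
  "MT1 a2 a4 a5 a6 a7 a8 t 4 3 = (2 * a4 * t + a2 * t)"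
  "MT1 a2 a4 a5 a6 a7 a8 t 4 4 = (1)"
  "MT1 a2 a4 a5 a6 a7 a8 t 4 5 = 0"
  "MT1 a2 a4 a5 a6 a7 a8 t 4 6 = 0"
  "MT1 a2 a4 a5 a6 a7 a8 t 4 7 = 0"
  "MT1 a2 a4 a5 a6 a7 a8 t 5 0 = 0"
  "MT1 a2 a4 a5 a6 a7 a8 t 5 1 = 0"
  "MT1 a2 a4 a5 a6 a7 a8 t 5 2 = 0"
  "MT1 a2 a4 a5 a6 a7 a8 t 5 3 = (a6 * t + a5 * t)"
  "MT1 a2 a4 a5 a6 a7 a8 t 5 4 = (4 * a4 * t + 2 * a2 * t)"
  "MT1 a2 a4 a5 a6 a7 a8 t 5 5 = (1)"
  "MT1 a2 a4 a5 a6 a7 a8 t 5 6 = 0"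
  "MT1 a2 a4 a5 a6 a7 a8 t 5 7 = 0"
  "MT1 a2 a4 a5 a6 a7 a8 t 6 0 = 0"
  "MT1 a2 a4 a5 a6 a7 a8 t 6 1 = 0"
  "MT1 a2 a4 a5 a6 a7 a8 t 6 2 = 0"
  "MT1 a2 a4 a5 a6 a7 a8 t 6 3 = (a7 * t)"
  "MT1 a2 a4 a5 a6 a7 a8 t 6 4 = (2 * a6 * t + 2 * a5 * t + 2 * a4 * a4 * t * t + 3 * a2 * a4 * t * t + a2 * a2 * t * t)"
  "MT1 a2 a4 a5 a6 a7 a8 t 6 5 = (5 * a4 * t + 3 * a2 * t)"
  "MT1 a2 a4 a5 a6 a7 a8 t 6 6 = (1)"
  "MT1 a2 a4 a5 a6 a7 a8 t 6 7 = 0"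
  "MT1 a2 a4 a5 a6 a7 a8 t 7 0 = 0"
  "MT1 a2 a4 a5 a6 a7 a8 t 7 1 = 0"
  "MT1 a2 a4 a5 a6 a7 a8 t 7 2 = 0"
  "MT1 a2 a4 a5 a6 a7 a8 t 7 3 = (a8 * t)"
  "MT1 a2 a4 a5 a6 a7 a8 t 7 4 = (2 * a7 * t + 2 * a4 * a5 * t * t + a2 * a6 * t * t + 2 * a2 * a5 * t * t)"
  "MT1 a2 a4 a5 a6 a7 a8 t 7 5 = (2 * a6 * t + 3 * a5 * t + 2 * a4 * a4 * t * t + 7 * a2 * a4 * t * t + 3 * a2 * a2 * t * t)"
  "MT1 a2 a4 a5 a6 a7 a8 t 7 6 = (5 * a4 * t + 4 * a2 * t)"
  "MT1 a2 a4 a5 a6 a7 a8 t 7 7 = (1)"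
  by (simp_all add: MT1_def)
lemma MT1_iso:
  fixes a2 a4 a5 a6 a7 a8 t b5 b6 b7 b8 :: "'a::field"
  assumes "b5 = (a5 + (-5) * a4 * a4 * t + (-5) * a2 * a4 * t + (-2) * a2 * a2 * t)" "b6 = (a6 + (-3) * a4 * a4 * t + (-3) * a2 * a4 * t)" "b7 = (a7 + (-9) * a4 * a6 * t + (-9) * a4 * a5 * t + 36 * a4 * a4 * a4 * t * t + (-5) * a2 * a6 * t + (-5) * a2 * a5 * t + 56 * a2 * a4 * a4 * t * t + 29 * a2 * a2 * a4 * t * t + 5 * a2 * a2 * a2 * t * t)" "b8 = (a8 + (-2) * a6 * a6 * t + (-5) * a5 * a6 * t + (-3) * a5 * a5 * t + (-9) * a4 * a7 * t + 59 * a4 * a4 * a6 * t * t + 63 * a4 * a4 * a5 * t * t + (-164) * a4 * a4 * a4 * a4 * t * t * t + (-6) * a2 * a7 * t + 68 * a2 * a4 * a6 * t * t + 72 * a2 * a4 * a5 * t * t + (-352) * a2 * a4 * a4 * a4 * t * t * t + 20 * a2 * a2 * a6 * t * t + 21 * a2 * a2 * a5 * t * t + (-285) * a2 * a2 * a4 * a4 * t * t * t + (-103) * a2 * a2 * a2 * a4 * t * t * t + (-14) * a2 * a2 * a2 * a2 * t * t * t)"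
  shows "lie_iso8 (L8 a2 a4 b5 b6 b7 b8) (L8 a2 a4 a5 a6 a7 a8)"
proof (rule iso_matrix[where M="MT1 a2 a4 a5 a6 a7 a8 t"])
  show "\<And>k i. k < i \<Longrightarrow> MT1 a2 a4 a5 a6 a7 a8 t k i = 0" by (auto simp: MT1_def)
  show "\<And>i. i < 8 \<Longrightarrow> MT1 a2 a4 a5 a6 a7 a8 t i i \<noteq> 0" by (simp add: MT1_def)
  show "\<And>p q k. 8 \<le> k \<Longrightarrow> L8 a2 a4 a5 a6 a7 a8 p q k = 0" by (rule L8_van)
  show "\<forall>i<8. \<forall>j<8. \<forall>k<8. (\<Sum>m<8. MT1 a2 a4 a5 a6 a7 a8 t k m * L8 a2 a4 b5 b6 b7 b8 i j m)
     = (\<Sum>p<8. \<Sum>q<8. MT1 a2 a4 a5 a6 a7 a8 t p i * MT1 a2 a4 a5 a6 a7 a8 t q j * L8 a2 a4 a5 a6 a7 a8 p q k)"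
    unfolding all8 sum8 MT1_tab L8_tab assms by (simp add: algebra_simps)
qed
definition MD :: "'a::field \<Rightarrow> 'a \<Rightarrow> nat \<Rightarrow> nat \<Rightarrow> 'a" where
 "MD x y k i = (if k = i \<and> k < 8 then (if k = 0 then x else x^(k-1)*y) else 0)"
lemma MD_tab:
  fixes x y :: "'a::field"
  shows
  "MD x y 0 0 = x"
  "MD x y 0 1 = 0"
  "MD x y 0 2 = 0"
  "MD x y 0 3 = 0"
  "MD x y 0 4 = 0"
  "MD x y 0 5 = 0"
  "MD x y 0 6 = 0"
  "MD x y 0 7 = 0"
  "MD x y 1 0 = 0"
  "MD x y 1 1 = y"
  "MD x y 1 2 = 0"
  "MD x y 1 3 = 0"
  "MD x y 1 4 = 0"
  "MD x y 1 5 = 0"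
  "MD x y 1 6 = 0"
  "MD x y 1 7 = 0"
  "MD x y 2 0 = 0"
  "MD x y 2 1 = 0"
  "MD x y 2 2 = x*y"
  "MD x y 2 3 = 0"
  "MD x y 2 4 = 0"
  "MD x y 2 5 = 0"
  "MD x y 2 6 = 0"
  "MD x y 2 7 = 0"
  "MD x y 3 0 = 0"
  "MD x y 3 1 = 0"
  "MD x y 3 2 = 0"
  "MD x y 3 3 = x*x*y"
  "MD x y 3 4 = 0"
  "MD x y 3 5 = 0"
  "MD x y 3 6 = 0"
  "MD x y 3 7 = 0"
  "MD x y 4 0 = 0"
  "MD x y 4 1 = 0"
  "MD x y 4 2 = 0"
  "MD x y 4 3 = 0"
  "MD x y 4 4 = x*x*x*y"
  "MD x y 4 5 = 0"
  "MD x y 4 6 = 0"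
  "MD x y 4 7 = 0"
  "MD x y 5 0 = 0"
  "MD x y 5 1 = 0"
  "MD x y 5 2 = 0"
  "MD x y 5 3 = 0"
  "MD x y 5 4 = 0"
  "MD x y 5 5 = x*x*x*x*y"
  "MD x y 5 6 = 0"
  "MD x y 5 7 = 0"
  "MD x y 6 0 = 0"
  "MD x y 6 1 = 0"
  "MD x y 6 2 = 0"
  "MD x y 6 3 = 0"
  "MD x y 6 4 = 0"
  "MD x y 6 5 = 0"
  "MD x y 6 6 = x*x*x*x*x*y"
  "MD x y 6 7 = 0"
  "MD x y 7 0 = 0"
  "MD x y 7 1 = 0"
  "MD x y 7 2 = 0"
  "MD x y 7 3 = 0"
  "MD x y 7 4 = 0"
  "MD x y 7 5 = 0"
  "MD x y 7 6 = 0"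
  "MD x y 7 7 = x*x*x*x*x*x*y"
  by (simp_all add: MD_def eval_nat_numeral)
lemma MD_iso:
  fixes a2 a4 a5 a6 a7 a8 x y b2 b4 b5 b6 b7 b8 :: "'a::field"
  assumes x: "x \<noteq> 0" and y: "y \<noteq> 0"
  and h: "b2 = a2*y/(x*x)" "b4 = a4*y/(x*x)" "b5 = a5*y/(x*x*x)" "b6 = a6*y/(x*x*x)"
    "b7 = a7*y/(x*x*x*x)" "b8 = a8*y/(x*x*x*x*x)"
  shows "lie_iso8 (L8 b2 b4 b5 b6 b7 b8) (L8 a2 a4 a5 a6 a7 a8)"
proof (rule iso_matrix[where M="MD x y"])
  show "\<And>k i. k < i \<Longrightarrow> MD x y k i = 0" by (auto simp: MD_def)
  show "\<And>i. i < 8 \<Longrightarrow> MD x y i i \<noteq> 0" using x y by (simp add: MD_def)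
  show "\<And>p q k. 8 \<le> k \<Longrightarrow> L8 a2 a4 a5 a6 a7 a8 p q k = 0" by (rule L8_van)
  show "\<forall>i<8. \<forall>j<8. \<forall>k<8. (\<Sum>m<8. MD x y k m * L8 b2 b4 b5 b6 b7 b8 i j m)
     = (\<Sum>p<8. \<Sum>q<8. MD x y p i * MD x y q j * L8 a2 a4 a5 a6 a7 a8 p q k)"
    unfolding all8 sum8 MD_tab L8_tab h using x y by (simp add: field_simps)
qed
lemma T1_ex:
  fixes a2 a4 a5 a6 a7 a8 t b5 b6 :: "'a::field"
  assumes "b5 = a5 - (5*a4*a4 + 5*a2*a4 + 2*a2*a2)*t" "b6 = a6 - (3*a4*a4 + 3*a2*a4)*t"
  shows "\<exists>b7 b8. lie_iso8 (L8 a2 a4 b5 b6 b7 b8) (L8 a2 a4 a5 a6 a7 a8)"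
  apply (intro exI)
  apply (rule MT1_iso[where t=t])
  using assms apply (simp add: algebra_simps)
  using assms apply (simp add: algebra_simps)
   apply (rule refl)
  apply (rule refl)
  done

lemma symL: "lie_iso8 (L8 b2 b4 b5 b6 b7 b8) (L8 a2 a4 a5 a6 a7 a8) \<Longrightarrow> lie_iso8 (L8 a2 a4 a5 a6 a7 a8) (L8 b2 b4 b5 b6 b7 b8)"
  by (rule iso_sym) (simp_all add: L8_van)

lemma caseI1:
  fixes a2 a4 a5 a6 a7 a8 :: "'a::field_char_0"
  assumes a4: "a4 \<noteq> 0" and l: "a2 + 2*a4 \<noteq> 0"
  shows "\<exists>l. lie_iso8 (L8 l 1 (-1) 1 0 0) (L8 a2 a4 a5 a6 a7 a8) \<or> lie_iso8 (L8 l 1 0 0 0 0) (L8 a2 a4 a5 a6 a7 a8)"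
proof -
  define t where "t = (a5+a6)/(2*(a2+2*a4)*(a2+2*a4))"
  define s where "s = a6 - (3*a4*a4 + 3*a2*a4)*t"
  have "\<exists>b7 b8. lie_iso8 (L8 a2 a4 (-s) s b7 b8) (L8 a2 a4 a5 a6 a7 a8)"
  proof (rule T1_ex[where t=t])
    show "s = a6 - (3*a4*a4 + 3*a2*a4)*t" by (simp add: s_def)
    have e: "(8*a4*a4 + 8*a2*a4 + 2*a2*a2) = 2*(a2+2*a4)*(a2+2*a4)" by (simp add: algebra_simps)
    have d: "2*(a2+2*a4)*(a2+2*a4) \<noteq> 0" using l by (simp only: mult_eq_0_iff de_Morgan_disj) simp
    have "(a5 + a6) = (8*a4*a4 + 8*a2*a4 + 2*a2*a2)*t"
      unfolding e t_def using d by simp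
    then show "- s = a5 - (5*a4*a4 + 5*a2*a4 + 2*a2*a2)*t"
      unfolding s_def by (simp add: algebra_simps)
  qed
  then obtain b7 b8 where s1: "lie_iso8 (L8 a2 a4 (-s) s b7 b8) (L8 a2 a4 a5 a6 a7 a8)" by blast
  define d8 where "d8 = b8 + (-2)*s*(b7/(2*a4))"
  have s2: "lie_iso8 (L8 a2 a4 (-s) s 0 d8) (L8 a2 a4 (-s) s b7 b8)"
    by (rule MS3_iso[where t="b7/(2*a4)"]) (use a4 in \<open>simp_all add: d8_def\<close>)
  have s3: "lie_iso8 (L8 a2 a4 (-s) s 0 0) (L8 a2 a4 (-s) s 0 d8)"
    by (rule MS4_iso[where t="d8/(3*a4)"]) (use a4 in \<open>simp_all\<close>)
  have s123: "lie_iso8 (L8 a2 a4 (-s) s 0 0) (L8 a2 a4 a5 a6 a7 a8)"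
    using iso_trans[OF s3 iso_trans[OF s2 s1]] .
  show ?thesis
  proof (cases "s = 0")
    case False
    have "lie_iso8 (L8 (a2/a4) 1 (-1) 1 0 0) (L8 a2 a4 (-s) s 0 0)"
      by (rule MD_iso[where x="s/a4" and y="(s/a4)*(s/a4)/a4"]) (use a4 False in \<open>simp_all add: field_simps\<close>)
    then show ?thesis using iso_trans s123 by blast
  next
    case True
    have "lie_iso8 (L8 (a2/a4) 1 0 0 0 0) (L8 a2 a4 (-s) s 0 0)"
      by (rule MD_iso[where x="1" and y="1/a4"]) (use a4 True in \<open>simp_all add: field_simps\<close>)
    then show ?thesis using iso_trans s123 by blast
  qed
qed

lemma caseI2:
  fixes a2 a4 a5 a6 a7 a8 :: "'a::field_char_0"
  assumes a4: "a4 \<noteq> 0" and l: "a2 = -2*a4"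
  shows "lie_iso8 (L8 (-2) 1 1 0 0 0) (L8 a2 a4 a5 a6 a7 a8) \<or> lie_iso8 (L8 (-2) 1 0 0 0 0) (L8 a2 a4 a5 a6 a7 a8)"
proof -
  define t where "t = -a6/(3*a4*a4)"
  define s where "s = a5 + a6"
  have "\<exists>b7 b8. lie_iso8 (L8 a2 a4 s 0 b7 b8) (L8 a2 a4 a5 a6 a7 a8)"
    by (rule T1_ex[where t=t]) (use a4 in \<open>simp_all add: s_def t_def l field_simps\<close>)
  then obtain b7 b8 where s1: "lie_iso8 (L8 a2 a4 s 0 b7 b8) (L8 a2 a4 a5 a6 a7 a8)" by blast
  define d8 where "d8 = b8 + (-2)*0*(b7/(2*a4))"
  have s2: "lie_iso8 (L8 a2 a4 s 0 0 d8) (L8 a2 a4 s 0 b7 b8)"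
    by (rule MS3_iso[where t="b7/(2*a4)"]) (use a4 in \<open>simp_all add: d8_def\<close>)
  have s3: "lie_iso8 (L8 a2 a4 s 0 0 0) (L8 a2 a4 s 0 0 d8)"
    by (rule MS4_iso[where t="d8/(3*a4)"]) (use a4 in \<open>simp_all\<close>)
  have s123: "lie_iso8 (L8 a2 a4 s 0 0 0) (L8 a2 a4 a5 a6 a7 a8)"
    using iso_trans[OF s3 iso_trans[OF s2 s1]] .
  show ?thesis
  proof (cases "s = 0")
    case False
    have "lie_iso8 (L8 (-2) 1 1 0 0 0) (L8 a2 a4 s 0 0 0)"
      by (rule MD_iso[where x="s/a4" and y="(s/a4)*(s/a4)/a4"]) (use a4 False in \<open>simp_all add: field_simps l\<close>)
    then show ?thesis using iso_trans s123 by blast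
  next
    case True
    have "lie_iso8 (L8 (-2) 1 0 0 0 0) (L8 a2 a4 s 0 0 0)"
      by (rule MD_iso[where x="1" and y="1/a4"]) (use a4 True in \<open>simp_all add: field_simps l\<close>)
    then show ?thesis using iso_trans s123 by blast
  qed
qed

lemma caseII1:
  fixes a2 a5 a6 a7 a8 :: "'a::field_char_0"
  assumes a2: "a2 \<noteq> 0" and a6: "a6 \<noteq> 0"
  shows "\<exists>l. lie_iso8 (L8 1 0 (-1) 1 l 0) (L8 a2 0 a5 a6 a7 a8)"
proof -
  define x where "x = a6/a2"
  define y where "y = x*x/a2"
  have x0: "x \<noteq> 0" and y0: "y \<noteq> 0" using a2 a6 by (auto simp: x_def y_def)
  define u where "u = a5/a6"
  have s1: "lie_iso8 (L8 1 0 u 1 (a7*y/(x*x*x*x)) (a8*y/(x*x*x*x*x))) (L8 a2 0 a5 a6 a7 a8)"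
    by (rule MD_iso[where x=x and y=y]) (use a2 a6 x0 in \<open>simp_all add: x_def y_def u_def field_simps\<close>)
  have "\<exists>b7 b8. lie_iso8 (L8 1 0 (-1) 1 b7 b8) (L8 1 0 u 1 (a7*y/(x*x*x*x)) (a8*y/(x*x*x*x*x)))"
    by (rule T1_ex[where t="(u+1)/2"]) (simp_all add: field_simps)
  then obtain b7 b8 where s2: "lie_iso8 (L8 1 0 (-1) 1 b7 b8) (L8 1 0 u 1 (a7*y/(x*x*x*x)) (a8*y/(x*x*x*x*x)))" by blast
  have s3: "lie_iso8 (L8 1 0 (-1) 1 b7 0) (L8 1 0 (-1) 1 b7 b8)"
    by (rule MS3_iso[where t="b8/2"]) simp_all
  show ?thesis using iso_trans[OF s3 iso_trans[OF s2 s1]] by blast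
qed

lemma caseII2:
  fixes a2 a5 a7 a8 :: "'a::field_char_0"
  assumes a2: "a2 \<noteq> 0" and ac: "alg_closed TYPE('a)"
  shows "\<exists>l. lie_iso8 (L8 l 0 0 0 1 1) (L8 a2 0 a5 0 a7 a8)
          \<or> lie_iso8 (L8 1 0 0 0 1 0) (L8 a2 0 a5 0 a7 a8)
          \<or> lie_iso8 (L8 1 0 0 0 0 1) (L8 a2 0 a5 0 a7 a8)
          \<or> lie_iso8 (L8 1 0 0 0 0 0) (L8 a2 0 a5 0 a7 a8)"
proof -
  have "\<exists>b7 b8. lie_iso8 (L8 a2 0 0 0 b7 b8) (L8 a2 0 a5 0 a7 a8)"
    by (rule T1_ex[where t="a5/(2*a2*a2)"]) (use a2 in \<open>simp_all add: field_simps\<close>)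
  then obtain b7 b8 where s1: "lie_iso8 (L8 a2 0 0 0 b7 b8) (L8 a2 0 a5 0 a7 a8)" by blast
  have root2: "\<exists>r::'a. r*r = c" for c
  proof -
    have "degree [:-c, 0, 1:] > 0" by simp
    then obtain r where "poly [:-c, 0, 1:] r = 0" using ac unfolding alg_closed_def by blast
    then show ?thesis by (auto simp: algebra_simps)
  qed
  have root3: "\<exists>r::'a. r*r*r = c" for c
  proof -
    have "degree [:-c, 0, 0, 1:] > 0" by simp
    then obtain r where "poly [:-c, 0, 0, 1:] r = 0" using ac unfolding alg_closed_def by blast
    then show ?thesis by (auto simp: algebra_simps)
  qed
  show ?thesis
  proof (cases "b7 = 0")
    case b7: False
    show ?thesis
    proof (cases "b8 = 0")
      case b8: False
      define x where "x = b8/b7"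
      define y where "y = x*x*x*x/b7"
      have "lie_iso8 (L8 (a2*y/(x*x)) 0 0 0 1 1) (L8 a2 0 0 0 b7 b8)"
        by (rule MD_iso[where x=x and y=y]) (use b7 b8 in \<open>simp_all add: x_def y_def field_simps\<close>)
      then show ?thesis using iso_trans s1 by blast
    next
      case b8: True
      obtain r where r: "r*r = b7/a2" using root2 by blast
      have r0: "r \<noteq> 0" using r a2 b7 by auto
      have "lie_iso8 (L8 1 0 0 0 1 0) (L8 a2 0 0 0 b7 b8)"
        by (rule MD_iso[where x=r and y="r*r/a2"]) (use b7 b8 a2 r r0 in \<open>simp_all add: field_simps\<close>)
      then show ?thesis using iso_trans s1 by blast
    qed
  next
    case b7: True
    show ?thesis
    proof (cases "b8 = 0")
      case b8: False
      obtain r where r: "r*r*r = b8/a2" using root3 by blast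
      have r0: "r \<noteq> 0" using r a2 b8 by auto
      have "lie_iso8 (L8 1 0 0 0 0 1) (L8 a2 0 0 0 b7 b8)"
        by (rule MD_iso[where x=r and y="r*r/a2"]) (use b7 b8 a2 r r0 in \<open>simp_all add: field_simps\<close>)
      then show ?thesis using iso_trans s1 by blast
    next
      case b8: True
      have "lie_iso8 (L8 1 0 0 0 0 0) (L8 a2 0 0 0 b7 b8)"
        by (rule MD_iso[where x=1 and y="1/a2"]) (use b7 b8 a2 in \<open>simp_all add: field_simps\<close>)
      then show ?thesis using iso_trans s1 by blast
    qed
  qed
qed

lemma caseIII1:
  fixes a5 a6 a7 a8 :: "'a::field_char_0"
  assumes a6: "a6 \<noteq> 0"
  shows "\<exists>l. lie_iso8 (L8 0 0 l 1 1 0) (L8 0 0 a5 a6 a7 a8) \<or> lie_iso8 (L8 0 0 l 1 0 0) (L8 0 0 a5 a6 a7 a8)"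
proof -
  have s1: "lie_iso8 (L8 0 0 a5 a6 a7 0) (L8 0 0 a5 a6 a7 a8)"
    by (rule MS3_iso[where t="a8/(2*a6)"]) (use a6 in \<open>simp_all\<close>)
  show ?thesis
  proof (cases "a7 = 0")
    case False
    define x where "x = a7/a6"
    have "lie_iso8 (L8 0 0 (a5/a6) 1 1 0) (L8 0 0 a5 a6 a7 0)"
      by (rule MD_iso[where x=x and y="x*x*x/a6"]) (use a6 False in \<open>simp_all add: x_def field_simps\<close>)
    then show ?thesis using iso_trans s1 by blast
  next
    case True
    have "lie_iso8 (L8 0 0 (a5/a6) 1 0 0) (L8 0 0 a5 a6 a7 0)"
      by (rule MD_iso[where x=1 and y="1/a6"]) (use a6 True in \<open>simp_all add: field_simps\<close>)
    then show ?thesis using iso_trans s1 by blast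
  qed
qed

lemma caseIII2:
  fixes a5 a7 a8 :: "'a::field_char_0"
  assumes a5: "a5 \<noteq> 0"
  shows "lie_iso8 (L8 0 0 1 0 1 0) (L8 0 0 a5 0 a7 a8) \<or> lie_iso8 (L8 0 0 1 0 0 0) (L8 0 0 a5 0 a7 a8)"
proof -
  have s1: "lie_iso8 (L8 0 0 a5 0 a7 0) (L8 0 0 a5 0 a7 a8)"
    by (rule MT1_iso[where t="a8/(3*a5*a5)"]) (use a5 in \<open>simp_all\<close>)
  show ?thesis
  proof (cases "a7 = 0")
    case False
    define x where "x = a7/a5"
    have "lie_iso8 (L8 0 0 1 0 1 0) (L8 0 0 a5 0 a7 0)"
      by (rule MD_iso[where x=x and y="x*x*x/a5"]) (use a5 False in \<open>simp_all add: x_def field_simps\<close>)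
    then show ?thesis using iso_trans s1 by blast
  next
    case True
    have "lie_iso8 (L8 0 0 1 0 0 0) (L8 0 0 a5 0 a7 0)"
      by (rule MD_iso[where x=1 and y="1/a5"]) (use a5 True in \<open>simp_all add: field_simps\<close>)
    then show ?thesis using iso_trans s1 by blast
  qed
qed

lemma caseIII3:
  fixes a7 a8 :: "'a::field_char_0"
  shows "lie_iso8 (L8 0 0 0 0 1 1) (L8 0 0 0 0 a7 a8) \<or> lie_iso8 (L8 0 0 0 0 1 0) (L8 0 0 0 0 a7 a8)
       \<or> lie_iso8 (L8 0 0 0 0 0 1) (L8 0 0 0 0 a7 a8) \<or> lie_iso8 (L8 0 0 0 0 0 0) (L8 0 0 0 0 a7 a8)"
proof (cases "a7 = 0")
  case a7: False
  show ?thesis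
  proof (cases "a8 = 0")
    case False
    define x where "x = a8/a7"
    have "lie_iso8 (L8 0 0 0 0 1 1) (L8 0 0 0 0 a7 a8)"
      by (rule MD_iso[where x=x and y="x*x*x*x/a7"]) (use a7 False in \<open>simp_all add: x_def field_simps\<close>)
    then show ?thesis by blast
  next
    case True
    have "lie_iso8 (L8 0 0 0 0 1 0) (L8 0 0 0 0 a7 a8)"
      by (rule MD_iso[where x=1 and y="1/a7"]) (use a7 True in \<open>simp_all add: field_simps\<close>)
    then show ?thesis by blast
  qed
next
  case a7: True
  show ?thesis
  proof (cases "a8 = 0")
    case False
    have "lie_iso8 (L8 0 0 0 0 0 1) (L8 0 0 0 0 a7 a8)"
      by (rule MD_iso[where x=1 and y="1/a8"]) (use a7 False in \<open>simp_all add: field_simps\<close>)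
    then show ?thesis by blast
  next
    case True
    have "lie_iso8 (L8 0 0 0 0 0 0) (L8 0 0 0 0 a7 a8)"
      by (rule MD_iso[where x=1 and y=1]) (use a7 True in \<open>simp_all\<close>)
    then show ?thesis by blast
  qed
qed
theorem proposition14:
  fixes a2 a4 a5 a6 a7 a8 :: "'a::field_char_0"
  assumes "alg_closed TYPE('a)"
  shows "\<exists>l::'a.
     lie_iso8 (L8 a2 a4 a5 a6 a7 a8) (L8 l 1 (-1) 1 0 0)
   \<or> lie_iso8 (L8 a2 a4 a5 a6 a7 a8) (L8 l 1 0 0 0 0)
   \<or> lie_iso8 (L8 a2 a4 a5 a6 a7 a8) (L8 (-2) 1 1 0 0 0)
   \<or> lie_iso8 (L8 a2 a4 a5 a6 a7 a8) (L8 1 0 (-1) 1 l 0)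
   \<or> lie_iso8 (L8 a2 a4 a5 a6 a7 a8) (L8 0 0 l 1 1 0)
   \<or> lie_iso8 (L8 a2 a4 a5 a6 a7 a8) (L8 0 0 l 1 0 0)
   \<or> lie_iso8 (L8 a2 a4 a5 a6 a7 a8) (L8 l 0 0 0 1 1)
   \<or> lie_iso8 (L8 a2 a4 a5 a6 a7 a8) (L8 1 0 0 0 1 0)
   \<or> lie_iso8 (L8 a2 a4 a5 a6 a7 a8) (L8 1 0 0 0 0 1)
   \<or> lie_iso8 (L8 a2 a4 a5 a6 a7 a8) (L8 1 0 0 0 0 0)
   \<or> lie_iso8 (L8 a2 a4 a5 a6 a7 a8) (L8 0 0 1 0 1 0)
   \<or> lie_iso8 (L8 a2 a4 a5 a6 a7 a8) (L8 0 0 1 0 0 0)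
   \<or> lie_iso8 (L8 a2 a4 a5 a6 a7 a8) (L8 0 0 0 0 1 0)
   \<or> lie_iso8 (L8 a2 a4 a5 a6 a7 a8) (L8 0 0 0 0 0 1)
   \<or> lie_iso8 (L8 a2 a4 a5 a6 a7 a8) (L8 0 0 0 0 0 0)"
proof (cases "a4 = 0")
  case a4: False
  show ?thesis
  proof (cases "a2 + 2*a4 = 0")
    case False
    then obtain l where "lie_iso8 (L8 l 1 (-1) 1 0 0) (L8 a2 a4 a5 a6 a7 a8) \<or> lie_iso8 (L8 l 1 0 0 0 0) (L8 a2 a4 a5 a6 a7 a8)"
      using caseI1[OF a4] by blast
    then show ?thesis by (meson symL)
  next
    case True
    then have "a2 = -2*a4" by (simp add: eq_neg_iff_add_eq_0)
    then have "lie_iso8 (L8 (-2) 1 1 0 0 0) (L8 a2 a4 a5 a6 a7 a8) \<or> lie_iso8 (L8 (-2) 1 0 0 0 0) (L8 a2 a4 a5 a6 a7 a8)"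
      using caseI2[OF a4] by blast
    then show ?thesis by (meson symL)
  qed
next
  case a4: True
  show ?thesis
  proof (cases "a2 = 0")
    case a2: False
    show ?thesis
    proof (cases "a6 = 0")
      case False
      then obtain l where "lie_iso8 (L8 1 0 (-1) 1 l 0) (L8 a2 0 a5 a6 a7 a8)" using caseII1[OF a2] by blast
      then show ?thesis using a4 by (meson symL)
    next
      case True
      then obtain l where "lie_iso8 (L8 l 0 0 0 1 1) (L8 a2 0 a5 0 a7 a8)
          \<or> lie_iso8 (L8 1 0 0 0 1 0) (L8 a2 0 a5 0 a7 a8)
          \<or> lie_iso8 (L8 1 0 0 0 0 1) (L8 a2 0 a5 0 a7 a8)
          \<or> lie_iso8 (L8 1 0 0 0 0 0) (L8 a2 0 a5 0 a7 a8)" using caseII2[OF a2 assms] by blast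
      then show ?thesis using a4 True by (meson symL)
    qed
  next
    case a2: True
    show ?thesis
    proof (cases "a6 = 0")
      case False
      then obtain l where "lie_iso8 (L8 0 0 l 1 1 0) (L8 0 0 a5 a6 a7 a8) \<or> lie_iso8 (L8 0 0 l 1 0 0) (L8 0 0 a5 a6 a7 a8)"
        using caseIII1 by blast
      then show ?thesis using a4 a2 by (meson symL)
    next
      case a6: True
      show ?thesis
      proof (cases "a5 = 0")
        case False
        then have "lie_iso8 (L8 0 0 1 0 1 0) (L8 0 0 a5 0 a7 a8) \<or> lie_iso8 (L8 0 0 1 0 0 0) (L8 0 0 a5 0 a7 a8)"
          by (rule caseIII2)
        then show ?thesis using a4 a2 a6 by (meson symL)
      next
        case True
        have "lie_iso8 (L8 0 0 0 0 1 1) (L8 0 0 0 0 a7 a8) \<or> lie_iso8 (L8 0 0 0 0 1 0) (L8 0 0 0 0 a7 a8)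
          \<or> lie_iso8 (L8 0 0 0 0 0 1) (L8 0 0 0 0 a7 a8) \<or> lie_iso8 (L8 0 0 0 0 0 0) (L8 0 0 0 0 a7 a8)"
          by (rule caseIII3)
        then show ?thesis using a4 a2 a6 True by (meson symL)
      qed
    qed
  qed
qed

end
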